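(* Let $r\ge1$ and consider the linear program $\mathrm{LP}_r$ over $\mathbb K$ described in the context. For every $\lambda\in\mathbb R$, let $\boldsymbol\mu=t^\lambda$. Then the valuation of the primal part $(\mathbf u,\mathbf v,\mathbf z,\mathbf z',\mathbf h)$ of the point with parameter $\boldsymbol\mu$ of the Hardy central path of $\mathrm{LP}_r$ equals $(u(\lambda),v(\lambda),z(\lambda),z'(\lambda),h(\lambda))$. These are given by: $u_0(\lambda)=1$, $v_0(\lambda)=\min(2,\lambda)$; $(u_i(\lambda),v_i(\lambda))=\big(1+\min(u_{i-1}(\lambda),v_{i-1}(\lambda)),\,1-2^{-i}+\max(u_{i-1}(\lambda),v_{i-1}(\lambda))\big)$ for $1\le i\le r$; $z_0(\lambda)=1$, $h_0(\lambda)=2$; and $z_i(\lambda)=1+u_{i-1}(\lambda)$, $z'_i(\lambda)=1+v_{i-1}(\lambda)$, $h_i(\lambda)=v_i(\lambda)$ for $1\le i\le r$.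
   Context: $\mathbb K$ is the real closed field of germs at $+\infty$ of real functions definable in $\bar{\mathbb R}^{\mathbb R}$, the ordered real field expanded by the power functions $t\mapsto t^r$. It contains the germs $t^\alpha$. $\mathrm{val}(\mathbf f)=\lim_{t\to\infty}\log|\mathbf f(t)|/\log t$, applied entrywise. $\mathrm{LP}_r$ has decision variables $\mathbf x=(\mathbf u_0,\mathbf v_0,\dots,\mathbf u_r,\mathbf v_r)$ and slack variables $\mathbf w=(\mathbf z_0,\mathbf h_0,\mathbf z_1,\mathbf z'_1,\mathbf h_1,\dots,\mathbf z_r,\mathbf z'_r,\mathbf h_r)$, all required to be $\ge0$. The problem is: minimize $\mathbf v_0$ subject to - $\mathbf u_0+\mathbf z_0=t$ and $\mathbf v_0+\mathbf h_0=t^2$; - for $1\le i\le r$: $\mathbf u_i+\mathbf z_i=t\mathbf u_{i-1}$, $\mathbf u_i+\mathbf z'_i=t\mathbf v_{i-1}$, and $\mathbf v_i+\mathbf h_i=t^{1-2^{-i}}(\mathbf u_{i-1}+\mathbf v_{i-1})$. This is of the form: minimize $\mathbf c^T\mathbf x$ subject to $\mathbf A\mathbf x+\mathbf w=\mathbf b$, $\mathbf x,\mathbf w\ge0$, with $\mathbf c=e_{\mathbf v_0}$. It is strictly feasible and has bounded feasible set. For each positive $\boldsymbol\mu\in\mathbb K$, its Hardy central path point is the unique solution $(\mathbf x,\mathbf w,\mathbf y,\mathbf s)$ over $\mathbb K$ of $\mathbf A\mathbf x+\mathbf w=\mathbf b$, $-\mathbf A^T\mathbf y+\mathbf s=\mathbf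 c$, $\mathbf w_i\mathbf y_i=\mathbf x_j\mathbf s_j=\boldsymbol\mu$ for all $i,j$, $\mathbf x,\mathbf w,\mathbf y,\mathbf s>0$. Its primal part is $(\mathbf x,\mathbf w)$. *)

theory Defs
  imports Complex_Main
begin

definition coef :: "real \<Rightarrow> nat \<Rightarrow> real" where
  "coef t i = t powr (1 - 1 / 2 ^ i)"

text \<open>Central path system of LP_r, instantiated at a real value t of the germ variable,
  with barrier parameter mu.  Primal: u, v (decision), z, z', h (slacks), indexed by
  0..r (z' only 1..r).  Dual: ya (rows u_i + z_i = ..; ya 0 is the row u_0 + z_0 = t),
  ya' (rows u_i + z'_i = .., i = 1..r), yb (rows v_i + h_i = ..; yb 0 is the row v_0 + h_0 = t^2),
  su, sv (dual slacks of u, v).  Dual equation: -A^T y + s = c, i.e. s = c + A^T y,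
  with c = e_(v_0).\<close>
definition cp_system ::
  "nat \<Rightarrow> real \<Rightarrow> real \<Rightarrow>
   (nat \<Rightarrow> real) \<Rightarrow> (nat \<Rightarrow> real) \<Rightarrow> (nat \<Rightarrow> real) \<Rightarrow> (nat \<Rightarrow> real) \<Rightarrow> (nat \<Rightarrow> real) \<Rightarrow>
   (nat \<Rightarrow> real) \<Rightarrow> (nat \<Rightarrow> real) \<Rightarrow> (nat \<Rightarrow> real) \<Rightarrow> (nat \<Rightarrow> real) \<Rightarrow> (nat \<Rightarrow> real) \<Rightarrow> bool"
where
  "cp_system r t mu u v z z' h ya ya' yb su sv \<longleftrightarrow>
     \<comment> \<open>primal equations\<close>
     u 0 + z 0 = t \<and> v 0 + h 0 = t ^ 2 \<and>
     (\<forall>i\<in>{1..r}. u i + z i = t * u (i - 1) \<and> u i + z' i = t * v (i - 1) \<and>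
                   v i + h i = coef t i * (u (i - 1) + v (i - 1))) \<and>
     \<comment> \<open>dual equations s = c + A^T y\<close>
     (\<forall>i\<in>{0..r}.
        su i = (if i = 0 then ya 0 else ya i + ya' i)
               - (if i < r then t * ya (i + 1) + coef t (i + 1) * yb (i + 1) else 0) \<and>
        sv i = (if i = 0 then 1 else 0) + yb i
               - (if i < r then t * ya' (i + 1) + coef t (i + 1) * yb (i + 1) else 0)) \<and>
     \<comment> \<open>centrality\<close>
     (\<forall>i\<in>{0..r}. z i * ya i = mu \<and> h i * yb i = mu \<and> u i * su i = mu \<and> v i * sv i = mu) \<and>
     (\<forall>i\<in>{1..r}. z' i * ya' i = mu) \<and>
     \<comment> \<open>positivity\<close>
     (\<forall>i\<in>{0..r}. u i > 0 \<and> v i > 0 \<and> z i > 0 \<and> h i > 0 \<and>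
                   ya i > 0 \<and> yb i > 0 \<and> su i > 0 \<and> sv i > 0) \<and>
     (\<forall>i\<in>{1..r}. z' i > 0 \<and> ya' i > 0)"

definition cp_primal ::
  "nat \<Rightarrow> real \<Rightarrow> real \<Rightarrow>
   (nat \<Rightarrow> real) \<Rightarrow> (nat \<Rightarrow> real) \<Rightarrow> (nat \<Rightarrow> real) \<Rightarrow> (nat \<Rightarrow> real) \<Rightarrow> (nat \<Rightarrow> real) \<Rightarrow> bool"
where
  "cp_primal r t mu u v z z' h \<longleftrightarrow>
     (\<exists>ya ya' yb su sv. cp_system r t mu u v z z' h ya ya' yb su sv)"

definition has_val :: "(real \<Rightarrow> real) \<Rightarrow> real \<Rightarrow> bool" where
  "has_val f a \<longleftrightarrow> ((\<lambda>t. ln \<bar>f t\<bar> / ln t) \<longlongrightarrow> a) at_top"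

fun uv_trop :: "real \<Rightarrow> nat \<Rightarrow> real \<times> real" where
  "uv_trop l 0 = (1, min 2 l)"
| "uv_trop l (Suc i) =
     (1 + min (fst (uv_trop l i)) (snd (uv_trop l i)),
      1 - 1 / 2 ^ Suc i + max (fst (uv_trop l i)) (snd (uv_trop l i)))"

definition u_trop :: "real \<Rightarrow> nat \<Rightarrow> real" where "u_trop l i = fst (uv_trop l i)"
definition v_trop :: "real \<Rightarrow> nat \<Rightarrow> real" where "v_trop l i = snd (uv_trop l i)"
definition z_trop :: "real \<Rightarrow> nat \<Rightarrow> real" where
  "z_trop l i = (if i = 0 then 1 else 1 + u_trop l (i - 1))"
definition z'_trop :: "real \<Rightarrow> nat \<Rightarrow> real" where
  "z'_trop l i = 1 + v_trop l (i - 1)"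
definition h_trop :: "real \<Rightarrow> nat \<Rightarrow> real" where
  "h_trop l i = (if i = 0 then 2 else v_trop l i)"

end

theory Submission
  imports Defs "HOL-Analysis.Analysis"
begin

definition Zf :: "real \<Rightarrow> (nat \<Rightarrow> real) \<Rightarrow> nat \<Rightarrow> real" where
  "Zf t u i = (if i = 0 then t - u 0 else t * u (i-1) - u i)"
definition Hf :: "real \<Rightarrow> (nat \<Rightarrow> real) \<Rightarrow> (nat \<Rightarrow> real) \<Rightarrow> nat \<Rightarrow> real" where
  "Hf t u v i = (if i = 0 then t^2 - v 0 else coef t i * (u (i-1) + v (i-1)) - v i)"
definition Zpf :: "real \<Rightarrow> (nat \<Rightarrow> real) \<Rightarrow> (nat \<Rightarrow> real) \<Rightarrow> nat \<Rightarrow> real" where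
  "Zpf t u v i = t * v (i-1) - u i"

lemma dual_identity_aux:
  fixes ya ya' yb u v :: "nat \<Rightarrow> real" and t :: real
  defines "G \<equiv> \<lambda>i. ya i * u i + (if i = 0 then 0 else ya' i * u i) + (if i = 0 then 1 else 0) * v i
      + yb i * v i + ya i * Zf t u i + yb i * Hf t u v i + (if i = 0 then 0 else ya' i * Zpf t u v i)"
  defines "K \<equiv> \<lambda>i. (t * ya (i+1) + coef t (i+1) * yb (i+1)) * u i + (t * ya' (i+1) + coef t (i+1) * yb (i+1)) * v i"
  shows "(\<Sum>i=0..r. G i) - (\<Sum>i<r. K i) = v 0 + t * ya 0 + t^2 * yb 0"
proof (induction r)
  case 0
  then show ?case by (simp add: G_def Zf_def Hf_def algebra_simps)
next
  case (Suc r)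
  have "G (Suc r) = K r" by (simp add: G_def K_def Zf_def Hf_def Zpf_def algebra_simps)
  then show ?case using Suc by simp
qed

lemma dual_identity:
  fixes ya ya' yb u v su sv :: "nat \<Rightarrow> real"
  assumes su: "\<And>i. i \<in> {0..r} \<Longrightarrow> su i = (if i = 0 then ya 0 else ya i + ya' i)
               - (if i < r then t * ya (i + 1) + coef t (i + 1) * yb (i + 1) else 0)"
  assumes sv: "\<And>i. i \<in> {0..r} \<Longrightarrow> sv i = (if i = 0 then 1 else 0) + yb i
               - (if i < r then t * ya' (i + 1) + coef t (i + 1) * yb (i + 1) else 0)"
  shows "(\<Sum>i=0..r. su i * u i + sv i * v i + ya i * Zf t u i + yb i * Hf t u v i)
        + (\<Sum>i=1..r. ya' i * Zpf t u v i) = v 0 + t * ya 0 + t^2 * yb 0"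
proof -
  define G where "G \<equiv> \<lambda>i. ya i * u i + (if i = 0 then 0 else ya' i * u i) + (if i = 0 then 1 else 0) * v i
      + yb i * v i + ya i * Zf t u i + yb i * Hf t u v i + (if i = 0 then 0 else ya' i * Zpf t u v i)"
  define K where "K \<equiv> \<lambda>i. (t * ya (i+1) + coef t (i+1) * yb (i+1)) * u i + (t * ya' (i+1) + coef t (i+1) * yb (i+1)) * v i"
  have e1: "(\<Sum>i=1..r. ya' i * Zpf t u v i) = (\<Sum>i=0..r. (if i = 0 then 0 else ya' i * Zpf t u v i))"
    by (simp add: sum.atLeast_Suc_atMost)
  have e2: "su i * u i + sv i * v i + ya i * Zf t u i + yb i * Hf t u v i + (if i = 0 then 0 else ya' i * Zpf t u v i)
      = G i - (if i < r then K i else 0)" if "i \<in> {0..r}" for i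
    unfolding su[OF that] sv[OF that] by (auto simp: G_def K_def algebra_simps)
  have e3: "(\<Sum>i=0..r. (if i < r then K i else 0)) = (\<Sum>i<r. K i)"
    by (rule sum.mono_neutral_cong_right) auto
  have "(\<Sum>i=0..r. su i * u i + sv i * v i + ya i * Zf t u i + yb i * Hf t u v i)
        + (\<Sum>i=1..r. ya' i * Zpf t u v i) = (\<Sum>i=0..r. G i - (if i < r then K i else 0))"
    unfolding e1 sum.distrib[symmetric] by (rule sum.cong) (use e2 in auto)
  also have "\<dots> = (\<Sum>i=0..r. G i) - (\<Sum>i<r. K i)" by (simp add: sum_subtractf e3)
  also have "\<dots> = v 0 + t * ya 0 + t^2 * yb 0" unfolding G_def K_def by (rule dual_identity_aux)
  finally show ?thesis .
qed

definition nonneg :: "nat \<Rightarrow> real \<Rightarrow> (nat \<Rightarrow> real) \<Rightarrow> (nat \<Rightarrow> real) \<Rightarrow> bool" where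
  "nonneg r t u v \<longleftrightarrow> (\<forall>i\<in>{0..r}. 0 \<le> u i \<and> 0 \<le> v i \<and> 0 \<le> Zf t u i \<and> 0 \<le> Hf t u v i) \<and>
      (\<forall>i\<in>{1..r}. 0 \<le> Zpf t u v i)"

lemma cp_facts:
  assumes cp: "cp_system r t mu u v z z' h ya ya' yb su sv" and mu: "mu > 0"
  shows "\<And>i. i \<in> {0..r} \<Longrightarrow> z i = Zf t u i \<and> h i = Hf t u v i \<and> su i = mu / u i \<and> sv i = mu / v i
           \<and> ya i = mu / z i \<and> yb i = mu / h i \<and> u i > 0 \<and> v i > 0 \<and> z i > 0 \<and> h i > 0"
    and "\<And>i. i \<in> {1..r} \<Longrightarrow> z' i = Zpf t u v i \<and> ya' i = mu / z' i \<and> z' i > 0"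
    and "\<And>i. i \<in> {0..r} \<Longrightarrow> su i = (if i = 0 then ya 0 else ya i + ya' i)
               - (if i < r then t * ya (i + 1) + coef t (i + 1) * yb (i + 1) else 0)"
    and "\<And>i. i \<in> {0..r} \<Longrightarrow> sv i = (if i = 0 then 1 else 0) + yb i
               - (if i < r then t * ya' (i + 1) + coef t (i + 1) * yb (i + 1) else 0)"
proof -
  note C = cp[unfolded cp_system_def]
  have e0: "u 0 + z 0 = t" "v 0 + h 0 = t^2" using C by blast+
  have e1: "\<forall>i\<in>{1..r}. u i + z i = t * u (i - 1) \<and> u i + z' i = t * v (i - 1) \<and>
                   v i + h i = coef t i * (u (i - 1) + v (i - 1))" using C by blast
  have e2: "\<forall>i\<in>{0..r}.
        su i = (if i = 0 then ya 0 else ya i + ya' i)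
               - (if i < r then t * ya (i + 1) + coef t (i + 1) * yb (i + 1) else 0) \<and>
        sv i = (if i = 0 then 1 else 0) + yb i
               - (if i < r then t * ya' (i + 1) + coef t (i + 1) * yb (i + 1) else 0)" using C by blast
  have e3: "\<forall>i\<in>{0..r}. z i * ya i = mu \<and> h i * yb i = mu \<and> u i * su i = mu \<and> v i * sv i = mu"
    using C by blast
  have e4: "\<forall>i\<in>{1..r}. z' i * ya' i = mu" using C by blast
  have e5: "\<forall>i\<in>{0..r}. u i > 0 \<and> v i > 0 \<and> z i > 0 \<and> h i > 0 \<and>
                   ya i > 0 \<and> yb i > 0 \<and> su i > 0 \<and> sv i > 0" using C by blast
  have e6: "\<forall>i\<in>{1..r}. z' i > 0 \<and> ya' i > 0" using C by blast
  {
  fix i assume i: "i \<in> {0..r}"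
  have pos: "u i > 0" "v i > 0" "z i > 0" "h i > 0" using e5 i by auto
  have c: "z i * ya i = mu" "h i * yb i = mu" "u i * su i = mu" "v i * sv i = mu"
    using e3 i by auto
  have zz: "z i = Zf t u i"
  proof (cases "i = 0")
    case True then show ?thesis using e0 unfolding Zf_def by auto
  next
    case False then have "i \<in> {1..r}" using i by auto
    then show ?thesis using e1 False unfolding Zf_def by (auto simp: algebra_simps)
  qed
  have hh: "h i = Hf t u v i"
  proof (cases "i = 0")
    case True then show ?thesis using e0 unfolding Hf_def by auto
  next
    case False then have "i \<in> {1..r}" using i by auto
    then show ?thesis using e1 False unfolding Hf_def by (auto simp: algebra_simps)
  qed
  show "z i = Zf t u i \<and> h i = Hf t u v i \<and> su i = mu / u i \<and> sv i = mu / v i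
           \<and> ya i = mu / z i \<and> yb i = mu / h i \<and> u i > 0 \<and> v i > 0 \<and> z i > 0 \<and> h i > 0"
    using pos c zz hh by (auto simp: field_simps)
  }
  {
  fix i assume i: "i \<in> {1..r}"
  have "z' i * ya' i = mu" "z' i > 0" "u i + z' i = t * v (i - 1)" using e1 e4 e6 i by auto
  then show "z' i = Zpf t u v i \<and> ya' i = mu / z' i \<and> z' i > 0"
    unfolding Zpf_def by (auto simp: field_simps)
  }
  {
  fix i assume i: "i \<in> {0..r}"
  show "su i = (if i = 0 then ya 0 else ya i + ya' i)
               - (if i < r then t * ya (i + 1) + coef t (i + 1) * yb (i + 1) else 0)"
       "sv i = (if i = 0 then 1 else 0) + yb i
               - (if i < r then t * ya' (i + 1) + coef t (i + 1) * yb (i + 1) else 0)"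
    using e2 i by auto
  }
qed

lemma cp_sum:
  assumes cp: "cp_system r t mu u v z z' h ya ya' yb su sv" and mu: "mu > 0"
  shows "(\<Sum>i=0..r. mu * u' i / u i + mu * v' i / v i + mu * Zf t u' i / Zf t u i + mu * Hf t u' v' i / Hf t u v i)
        + (\<Sum>i=1..r. mu * Zpf t u' v' i / Zpf t u v i) = v' 0 + t * ya 0 + t^2 * yb 0"
proof -
  note F = cp_facts[OF cp mu]
  have "(\<Sum>i=0..r. su i * u' i + sv i * v' i + ya i * Zf t u' i + yb i * Hf t u' v' i)
        + (\<Sum>i=1..r. ya' i * Zpf t u' v' i) = v' 0 + t * ya 0 + t^2 * yb 0"
    by (rule dual_identity) (use F(3,4) in auto)
  moreover have "(\<Sum>i=0..r. su i * u' i + sv i * v' i + ya i * Zf t u' i + yb i * Hf t u' v' i)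
     = (\<Sum>i=0..r. mu * u' i / u i + mu * v' i / v i + mu * Zf t u' i / Zf t u i + mu * Hf t u' v' i / Hf t u v i)"
    by (rule sum.cong) (use F(1) in auto)
  moreover have "(\<Sum>i=1..r. ya' i * Zpf t u' v' i) = (\<Sum>i=1..r. mu * Zpf t u' v' i / Zpf t u v i)"
    by (rule sum.cong) (use F(2) in auto)
  ultimately show ?thesis by simp
qed

lemma cp_N:
  assumes cp: "cp_system r t mu u v z z' h ya ya' yb su sv" and mu: "mu > 0"
  shows "(5 * real r + 4) * mu = v 0 + t * ya 0 + t^2 * yb 0"
proof -
  note F = cp_facts[OF cp mu]
  have "(\<Sum>i=0..r. mu * u i / u i + mu * v i / v i + mu * Zf t u i / Zf t u i + mu * Hf t u v i / Hf t u v i)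
     = (\<Sum>i=0..r. 4 * mu)"
  proof (rule sum.cong)
    fix i assume "i \<in> {0..r}"
    from F(1)[OF this] show "mu * u i / u i + mu * v i / v i + mu * Zf t u i / Zf t u i + mu * Hf t u v i / Hf t u v i = 4 * mu"
      by auto
  qed simp
  moreover have "(\<Sum>i=1..r. mu * Zpf t u v i / Zpf t u v i) = (\<Sum>i=1..r. mu)"
    by (rule sum.cong) (use F(2) in force)+
  ultimately show ?thesis using cp_sum[OF cp mu, of u v] by (simp add: algebra_simps)
qed

definition fq :: "real \<Rightarrow> real \<Rightarrow> real" where "fq a b = a / b + b / a - 2"

lemma fq_eq: "a > 0 \<Longrightarrow> b > 0 \<Longrightarrow> fq a b = (a - b)^2 / (a * b)"
  unfolding fq_def by (simp add: field_simps power2_eq_square)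

lemma fq_nonneg: "a > 0 \<Longrightarrow> b > 0 \<Longrightarrow> fq a b \<ge> 0"
  by (simp add: fq_eq)

lemma fq_zero: "a > 0 \<Longrightarrow> b > 0 \<Longrightarrow> fq a b = 0 \<Longrightarrow> a = b"
  by (simp add: fq_eq)

lemma cp_unique:
  assumes cp1: "cp_system r t mu u1 v1 z1 z1' h1 ya1 ya1' yb1 su1 sv1"
      and cp2: "cp_system r t mu u2 v2 z2 z2' h2 ya2 ya2' yb2 su2 sv2" and mu: "mu > 0"
  shows "\<forall>i\<in>{0..r}. u1 i = u2 i \<and> v1 i = v2 i"
proof -
  note F1 = cp_facts[OF cp1 mu] and F2 = cp_facts[OF cp2 mu]
  define q where "q i = fq (u2 i) (u1 i) + fq (v2 i) (v1 i) + fq (Zf t u2 i) (Zf t u1 i) + fq (Hf t u2 v2 i) (Hf t u1 v1 i)" for i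
  define q' where "q' i = fq (Zpf t u2 v2 i) (Zpf t u1 v1 i)" for i
  define T12 where "T12 i = mu * u2 i / u1 i + mu * v2 i / v1 i + mu * Zf t u2 i / Zf t u1 i + mu * Hf t u2 v2 i / Hf t u1 v1 i" for i
  define T21 where "T21 i = mu * u1 i / u2 i + mu * v1 i / v2 i + mu * Zf t u1 i / Zf t u2 i + mu * Hf t u1 v1 i / Hf t u2 v2 i" for i
  define P12 where "P12 i = mu * Zpf t u2 v2 i / Zpf t u1 v1 i" for i
  define P21 where "P21 i = mu * Zpf t u1 v1 i / Zpf t u2 v2 i" for i
  have s12: "(\<Sum>i=0..r. T12 i) + (\<Sum>i=1..r. P12 i) = v2 0 + t * ya1 0 + t^2 * yb1 0"
    unfolding T12_def P12_def by (rule cp_sum[OF cp1 mu])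
  have s21: "(\<Sum>i=0..r. T21 i) + (\<Sum>i=1..r. P21 i) = v1 0 + t * ya2 0 + t^2 * yb2 0"
    unfolding T21_def P21_def by (rule cp_sum[OF cp2 mu])
  have n1: "(5 * real r + 4) * mu = v1 0 + t * ya1 0 + t^2 * yb1 0" by (rule cp_N[OF cp1 mu])
  have n2: "(5 * real r + 4) * mu = v2 0 + t * ya2 0 + t^2 * yb2 0" by (rule cp_N[OF cp2 mu])
  have tq: "mu * q i = T12 i + T21 i - 8 * mu" if "i \<in> {0..r}" for i
    using F1(1)[OF that] F2(1)[OF that] unfolding q_def T12_def T21_def fq_def
    by (simp add: field_simps)
  have tq': "mu * q' i = P12 i + P21 i - 2 * mu" if "i \<in> {1..r}" for i
    using F1(2)[OF that] F2(2)[OF that] unfolding q'_def P12_def P21_def fq_def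
    by (simp add: field_simps)
  have "(\<Sum>i=0..r. mu * q i) + (\<Sum>i=1..r. mu * q' i)
      = (\<Sum>i=0..r. T12 i + T21 i - 8 * mu) + (\<Sum>i=1..r. P12 i + P21 i - 2 * mu)"
    using tq tq' by simp
  also have "\<dots> = ((\<Sum>i=0..r. T12 i) + (\<Sum>i=1..r. P12 i)) + ((\<Sum>i=0..r. T21 i) + (\<Sum>i=1..r. P21 i))
      - 8 * mu * (real r + 1) - 2 * mu * real r"
    by (simp add: sum.distrib sum_subtractf algebra_simps)
  also have "\<dots> = 0" unfolding s12 s21 using n1 n2 by (simp add: algebra_simps)
  finally have "mu * ((\<Sum>i=0..r. q i) + (\<Sum>i=1..r. q' i)) = 0"
    by (simp add: sum_distrib_left algebra_simps)
  hence Q: "(\<Sum>i=0..r. q i) + (\<Sum>i=1..r. q' i) = 0" using mu by simp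
  have qn: "q i \<ge> 0" if "i \<in> {0..r}" for i
    using F1(1)[OF that] F2(1)[OF that] unfolding q_def by (auto intro!: add_nonneg_nonneg fq_nonneg)
  have qn': "q' i \<ge> 0" if "i \<in> {1..r}" for i
    using F1(2)[OF that] F2(2)[OF that] unfolding q'_def by (auto intro!: fq_nonneg)
  have "(\<Sum>i=0..r. q i) = 0"
  proof -
    have "0 \<le> (\<Sum>i=0..r. q i)" using qn by (rule sum_nonneg)
    moreover have "0 \<le> (\<Sum>i=1..r. q' i)" using qn' by (rule sum_nonneg)
    ultimately show ?thesis using Q by linarith
  qed
  hence q0: "\<forall>i\<in>{0..r}. q i = 0" using sum_nonneg_eq_0_iff[of "{0..r}" q] qn by blast
  show ?thesis
  proof
    fix i assume i: "i \<in> {0..r}"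
    have a: "fq (u2 i) (u1 i) \<ge> 0" "fq (v2 i) (v1 i) \<ge> 0" "fq (Zf t u2 i) (Zf t u1 i) \<ge> 0"
        "fq (Hf t u2 v2 i) (Hf t u1 v1 i) \<ge> 0"
      using F1(1)[OF i] F2(1)[OF i] by (auto intro!: fq_nonneg)
    have "q i = 0" using q0 i by auto
    hence "fq (u2 i) (u1 i) = 0" "fq (v2 i) (v1 i) = 0" using a unfolding q_def by linarith+
    thus "u1 i = u2 i \<and> v1 i = v2 i" using F1(1)[OF i] F2(1)[OF i] fq_zero by metis
  qed
qed

lemma cp_lower:
  assumes cp: "cp_system r t mu u v z z' h ya ya' yb su sv" and mu: "mu > 0" and nn: "nonneg r t u' v'"
  defines "S \<equiv> v' 0 + t * ya 0 + t^2 * yb 0"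
  shows "\<And>i. i \<in> {0..r} \<Longrightarrow> mu * u' i / u i \<le> S \<and> mu * v' i / v i \<le> S \<and>
                 mu * Zf t u' i / Zf t u i \<le> S \<and> mu * Hf t u' v' i / Hf t u v i \<le> S"
    and "\<And>i. i \<in> {1..r} \<Longrightarrow> mu * Zpf t u' v' i / Zpf t u v i \<le> S"
proof -
  note F = cp_facts[OF cp mu]
  define T where "T i = mu * u' i / u i + mu * v' i / v i + mu * Zf t u' i / Zf t u i + mu * Hf t u' v' i / Hf t u v i" for i
  define P where "P i = mu * Zpf t u' v' i / Zpf t u v i" for i
  have sum: "(\<Sum>i=0..r. T i) + (\<Sum>i=1..r. P i) = S"
    unfolding T_def P_def S_def by (rule cp_sum[OF cp mu])
  have Pn: "P i \<ge> 0" if "i \<in> {1..r}" for i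
    using F(2)[OF that] nn that mu unfolding P_def nonneg_def by auto
  have Tn: "0 \<le> mu * u' i / u i \<and> 0 \<le> mu * v' i / v i \<and> 0 \<le> mu * Zf t u' i / Zf t u i \<and> 0 \<le> mu * Hf t u' v' i / Hf t u v i"
    if "i \<in> {0..r}" for i
    using F(1)[OF that] nn that mu unfolding nonneg_def by auto
  have "0 \<le> (\<Sum>i=1..r. P i)" using Pn by (rule sum_nonneg)
  hence ST: "(\<Sum>i=0..r. T i) \<le> S" using sum by linarith
  have "0 \<le> (\<Sum>i=0..r. T i)" using Tn unfolding T_def by (intro sum_nonneg) auto
  hence SP: "(\<Sum>i=1..r. P i) \<le> S" using sum by linarith
  {
    fix i assume i: "i \<in> {0..r}"
    have "T i \<le> (\<Sum>i=0..r. T i)"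
      by (rule member_le_sum) (use i Tn in \<open>auto simp: T_def\<close>)
    thus "mu * u' i / u i \<le> S \<and> mu * v' i / v i \<le> S \<and>
                 mu * Zf t u' i / Zf t u i \<le> S \<and> mu * Hf t u' v' i / Hf t u v i \<le> S"
      using ST Tn[OF i] unfolding T_def by linarith
  }
  {
    fix i assume i: "i \<in> {1..r}"
    have "P i \<le> (\<Sum>i=1..r. P i)"
      by (rule member_le_sum) (use i Pn in auto)
    thus "mu * Zpf t u' v' i / Zpf t u v i \<le> S" using SP unfolding P_def by linarith
  }
qed

fun gg :: "real \<Rightarrow> real \<Rightarrow> nat \<Rightarrow> real \<times> real" where
  "gg t m 0 = (t, min (t^2) m)"
| "gg t m (Suc i) = (t * min (fst (gg t m i)) (snd (gg t m i)),
      coef t (Suc i) * (fst (gg t m i) + snd (gg t m i)))"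

definition gu where "gu t m i = fst (gg t m i)"
definition gv where "gv t m i = snd (gg t m i)"

lemma gu_simps: "gu t m 0 = t" "gu t m (Suc i) = t * min (gu t m i) (gv t m i)"
  by (simp_all add: gu_def gv_def)
lemma gv_simps: "gv t m 0 = min (t^2) m" "gv t m (Suc i) = coef t (Suc i) * (gu t m i + gv t m i)"
  by (simp_all add: gu_def gv_def)

lemma coef_pos: "t > 0 \<Longrightarrow> coef t i > 0"
  by (simp add: coef_def)

lemma g_pos: assumes "t > 0" "m > 0" shows "gu t m i > 0 \<and> gv t m i > 0"
  by (induction i) (use assms coef_pos[OF assms(1)] in \<open>auto simp: gu_simps gv_simps\<close>)

definition pu where "pu t m i = gu t m i / 2^(i+1)"
definition pv where "pv t m i = gv t m i / 2^(i+1)"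

definition Gz where "Gz t m i = (if i = 0 then t else t * gu t m (i-1))"
definition Gh where "Gh t m i = (if i = 0 then t^2 else gv t m i)"
definition Gz' where "Gz' t m i = t * gv t m (i-1)"

lemma p_bounds:
  assumes t: "t > 0" and m: "m > 0"
  shows "pu t m i \<ge> gu t m i / 2^(i+2)" "pv t m i \<ge> gv t m i / 2^(i+2)"
    "Zf t (pu t m) i \<ge> Gz t m i / 2^(i+2)" "Hf t (pu t m) (pv t m) i \<ge> Gh t m i / 2^(i+2)"
    "i \<ge> 1 \<Longrightarrow> Zpf t (pu t m) (pv t m) i \<ge> Gz' t m i / 2^(i+2)"
proof -
  have gp: "gu t m j > 0" "gv t m j > 0" for j using g_pos[OF t m] by auto
  show "pu t m i \<ge> gu t m i / 2^(i+2)" using gp(1)[of i] unfolding pu_def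
    by (intro divide_left_mono) auto
  show "pv t m i \<ge> gv t m i / 2^(i+2)" using gp(2)[of i] unfolding pv_def
    by (intro divide_left_mono) auto
  show "Zf t (pu t m) i \<ge> Gz t m i / 2^(i+2)"
  proof (cases i)
    case 0 then show ?thesis using t by (simp add: Zf_def Gz_def pu_def gu_simps)
  next
    case (Suc k)
    have "gu t m (Suc k) \<le> t * gu t m k" by (simp add: gu_simps mult_left_mono t less_imp_le)
    moreover have "t * gu t m k > 0" using gp t by simp
    ultimately show ?thesis using Suc t by (simp add: Zf_def Gz_def pu_def field_simps)
  qed
  show "Hf t (pu t m) (pv t m) i \<ge> Gh t m i / 2^(i+2)"
  proof (cases i)
    case 0
    have "min (t^2) m \<le> t^2" by simp
    moreover have "t^2 > 0" using t by simp
    ultimately have "2 * min (t\<^sup>2) m \<le> 3 * t\<^sup>2" by linarith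
    then show ?thesis using 0 by (simp add: Hf_def Gh_def pv_def gv_simps)
  next
    case (Suc k)
    have "Hf t (pu t m) (pv t m) i = Gh t m i / 2^(i+1)"
      using Suc t by (simp add: Hf_def Gh_def pu_def pv_def gv_simps field_simps)
    moreover have "Gh t m i / 2^(i+2) \<le> Gh t m i / 2^(i+1)"
      using gp(2)[of i] Suc by (intro divide_left_mono) (auto simp: Gh_def)
    ultimately show ?thesis by simp
  qed
  show "Zpf t (pu t m) (pv t m) i \<ge> Gz' t m i / 2^(i+2)" if i1: "i \<ge> 1"
  proof -
    obtain k where k: "i = Suc k" using Suc_le_D[of 0 i] i1 by auto
    have "gu t m (Suc k) \<le> t * gv t m k" by (simp add: gu_simps mult_left_mono t less_imp_le)
    moreover have "t * gv t m k > 0" using gp t by simp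
    ultimately show ?thesis using k t by (simp add: Zpf_def Gz'_def pu_def pv_def field_simps)
  qed
qed

lemma G_pos: assumes "t > 0" "m > 0" shows "Gz t m i > 0" "Gh t m i > 0" "Gz' t m i > 0"
  using g_pos[OF assms] assms by (auto simp: Gz_def Gh_def Gz'_def)

lemma p_feas: assumes t: "t > 0" and m: "m > 0"
  shows "pu t m i > 0" "pv t m i > 0" "Zf t (pu t m) i > 0" "Hf t (pu t m) (pv t m) i > 0"
    "i \<ge> 1 \<Longrightarrow> Zpf t (pu t m) (pv t m) i > 0"
proof -
  note gp = g_pos[OF t m] and Gp = G_pos[OF t m]
  show "pu t m i > 0" "pv t m i > 0" using gp by (auto simp: pu_def pv_def)
  show "Zf t (pu t m) i > 0" using p_bounds(3)[OF t m, of i] Gp(1)[of i]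
    by (smt (verit) divide_pos_pos zero_less_power)
  show "Hf t (pu t m) (pv t m) i > 0" using p_bounds(4)[OF t m, of i] Gp(2)[of i]
    by (smt (verit) divide_pos_pos zero_less_power)
  show "i \<ge> 1 \<Longrightarrow> Zpf t (pu t m) (pv t m) i > 0" using p_bounds(5)[OF t m, of i] Gp(3)[of i]
    by (smt (verit) divide_pos_pos zero_less_power)
qed

lemma p_nonneg: assumes "t > 0" "m > 0" shows "nonneg r t (pu t m) (pv t m)"
  using p_feas[OF assms] unfolding nonneg_def by (auto intro: less_imp_le)

lemma lower_step:
  fixes G X p mu N :: real
  assumes "G > 0" "X > 0" "mu > 0" "N \<ge> 0" "G / 2^(i+2) \<le> p" "mu * p / X \<le> (N+1) * mu" "i \<le> r"
  shows "G / (2^(r+2) * (N+1)) \<le> X"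
proof -
  have "mu * p \<le> mu * ((N+1) * X)" using assms(2,3,6) by (simp add: field_simps)
  hence "p \<le> (N+1) * X" using assms(3) by simp
  moreover have "G \<le> 2^(i+2) * p" using assms(5) by (simp add: field_simps)
  moreover have "(2::real)^(i+2) \<le> 2^(r+2)" using assms(7) by (intro power_increasing) auto
  moreover have "p \<ge> 0" using assms(1,5) by (smt (verit) divide_pos_pos zero_less_power)
  ultimately have "G \<le> 2^(r+2) * ((N+1) * X)"
    by (smt (verit) mult_right_mono mult_left_mono zero_le_power)
  moreover have "(2::real)^(r+2) * (N+1) > 0" using assms(4) by simp
  ultimately show ?thesis by (simp add: pos_divide_le_eq mult.commute mult.left_commute)
qed

lemma cp_upper:
  assumes cp: "cp_system r t mu u v z z' h ya ya' yb su sv" and mu: "mu > 0" and t: "t > 0"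
  defines "N \<equiv> 5 * real r + 4"
  shows "i \<le> r \<Longrightarrow> u i \<le> N * gu t mu i \<and> v i \<le> N * gv t mu i"
proof (induction i)
  note F = cp_facts[OF cp mu]
  case 0
  have f0: "Zf t u 0 > 0" "Hf t u v 0 > 0" "u 0 > 0" "ya 0 > 0" "yb 0 > 0" using F(1)[of 0] mu by auto
  have n: "N * mu = v 0 + t * ya 0 + t^2 * yb 0" unfolding N_def by (rule cp_N[OF cp mu])
  have "v 0 < N * mu" using n f0 t by (smt (verit) mult_pos_pos zero_less_power)
  moreover have "v 0 < t^2" using f0 by (simp add: Hf_def)
  moreover have "N \<ge> 1" unfolding N_def by simp
  ultimately have "v 0 \<le> N * min (t^2) mu"
    by (smt (verit, best) min_def mult_le_cancel_right1 zero_le_power2)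
  moreover have "u 0 \<le> N * t" using f0 \<open>N \<ge> 1\<close> t by (simp add: Zf_def) (smt (verit) mult_le_cancel_right1)
  ultimately show ?case by (simp add: gu_simps gv_simps)
next
  note F = cp_facts[OF cp mu]
  case (Suc k)
  then have IH: "u k \<le> N * gu t mu k" "v k \<le> N * gv t mu k" by auto
  have a: "Suc k \<in> {0..r}" and b: "Suc k \<in> {1..r}" using Suc by auto
  have f: "Zf t u (Suc k) > 0" "Hf t u v (Suc k) > 0" "Zpf t u v (Suc k) > 0"
    using F(1)[OF a] F(2)[OF b] by auto
  have c: "coef t (Suc k) > 0" using coef_pos t by auto
  have "u (Suc k) < t * u k" "u (Suc k) < t * v k" using f by (auto simp: Zf_def Zpf_def)
  moreover have "t * u k \<le> N * (t * gu t mu k)" "t * v k \<le> N * (t * gv t mu k)"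
    using IH t by (simp_all add: mult_left_mono mult.left_commute)
  ultimately have "u (Suc k) \<le> N * (t * min (gu t mu k) (gv t mu k))"
    unfolding min_def by auto
  moreover have "v (Suc k) \<le> coef t (Suc k) * (N * gu t mu k + N * gv t mu k)"
    using f IH c by (simp add: Hf_def) (smt (verit) mult_left_mono)
  moreover have "N \<ge> 0" unfolding N_def by simp
  ultimately show ?case by (simp add: gu_simps gv_simps algebra_simps)
qed

lemma cp_bounds:
  assumes cp: "cp_system r t mu u v z z' h ya ya' yb su sv" and mu: "mu > 0" and t: "t > 0"
    and i: "i \<le> r"
  defines "N \<equiv> 5 * real r + 4"
  defines "c \<equiv> 1 / (2^(r+2) * (N+1))"
  shows "c * gu t mu i \<le> u i \<and> u i \<le> N * gu t mu i"
    "c * gv t mu i \<le> v i \<and> v i \<le> N * gv t mu i"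
    "c * Gz t mu i \<le> Zf t u i \<and> Zf t u i \<le> N * Gz t mu i"
    "c * Gh t mu i \<le> Hf t u v i \<and> Hf t u v i \<le> N * Gh t mu i"
    "i \<ge> 1 \<Longrightarrow> c * Gz' t mu i \<le> Zpf t u v i \<and> Zpf t u v i \<le> N * Gz' t mu i"
proof -
  note F = cp_facts[OF cp mu]
  have N0: "N \<ge> 1" unfolding N_def by simp
  have up: "u j \<le> N * gu t mu j \<and> v j \<le> N * gv t mu j" if "j \<le> r" for j
    using cp_upper[OF cp mu t that] unfolding N_def .
  have n: "N * mu = v 0 + t * ya 0 + t^2 * yb 0" unfolding N_def by (rule cp_N[OF cp mu])
  have f0: "v 0 > 0" using F(1)[of 0] by auto
  have S: "pv t mu 0 + t * ya 0 + t^2 * yb 0 \<le> (N+1) * mu"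
  proof -
    have "pv t mu 0 \<le> mu" using mu by (simp add: pv_def gv_simps)
    thus ?thesis using n f0 by (simp add: algebra_simps)
  qed
  note L = cp_lower[OF cp mu p_nonneg[OF t mu]]
  have ii: "i \<in> {0..r}" using i by simp
  note Fi = F(1)[OF ii]
  note gp = g_pos[OF t mu] and Gp = G_pos[OF t mu] and pb = p_bounds[OF t mu]
  have cdef: "G / (2^(r+2) * (N+1)) = c * G" for G unfolding c_def by simp
  show "c * gu t mu i \<le> u i \<and> u i \<le> N * gu t mu i"
    using lower_step[of "gu t mu i" "u i" mu N i "pu t mu i" r] L(1)[OF ii] S Fi mu gp pb(1) N0 i up[OF i]
    unfolding cdef by auto
  show "c * gv t mu i \<le> v i \<and> v i \<le> N * gv t mu i"
    using lower_step[of "gv t mu i" "v i" mu N i "pv t mu i" r] L(1)[OF ii] S Fi mu gp pb(2) N0 i up[OF i]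
    unfolding cdef by auto
  have lz: "c * Gz t mu i \<le> Zf t u i"
    using lower_step[of "Gz t mu i" "Zf t u i" mu N i "Zf t (pu t mu) i" r] L(1)[OF ii] S Fi mu Gp pb(3) N0 i
    unfolding cdef by auto
  have uz: "Zf t u i \<le> N * Gz t mu i"
  proof (cases i)
    case 0
    then show ?thesis using Fi N0 t by (simp add: Zf_def Gz_def) (smt (verit) mult_le_cancel_right1)
  next
    case (Suc k)
    have "k \<le> r" using Suc i by simp
    then have "t * u k \<le> t * (N * gu t mu k)" using up t by (simp add: mult_left_mono)
    moreover have "u i > 0" using Fi by simp
    ultimately show ?thesis using Suc by (simp add: Zf_def Gz_def algebra_simps)
  qed
  show "c * Gz t mu i \<le> Zf t u i \<and> Zf t u i \<le> N * Gz t mu i" using lz uz by simp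
  have lh: "c * Gh t mu i \<le> Hf t u v i"
    using lower_step[of "Gh t mu i" "Hf t u v i" mu N i "Hf t (pu t mu) (pv t mu) i" r] L(1)[OF ii] S Fi mu Gp pb(4) N0 i
    unfolding cdef by auto
  have uh: "Hf t u v i \<le> N * Gh t mu i"
  proof (cases i)
    case 0
    then show ?thesis using Fi N0 t f0 by (simp add: Hf_def Gh_def)
      (smt (verit) mult_le_cancel_right1 zero_le_power2)
  next
    case (Suc k)
    have "k \<le> r" using Suc i by simp
    have c: "coef t (Suc k) > 0" using coef_pos t by auto
    have "coef t (Suc k) * (u k + v k) \<le> coef t (Suc k) * (N * gu t mu k + N * gv t mu k)"
      using up[OF \<open>k \<le> r\<close>] c by (intro mult_left_mono) auto
    moreover have "v i > 0" using Fi by simp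
    ultimately show ?thesis using Suc by (simp add: Hf_def Gh_def gv_simps algebra_simps)
  qed
  show "c * Gh t mu i \<le> Hf t u v i \<and> Hf t u v i \<le> N * Gh t mu i" using lh uh by simp
  assume i1: "i \<ge> 1"
  have ii1: "i \<in> {1..r}" using i i1 by simp
  have Fi1: "Zpf t u v i > 0" using F(2)[OF ii1] by simp
  have lz': "c * Gz' t mu i \<le> Zpf t u v i"
    using lower_step[of "Gz' t mu i" "Zpf t u v i" mu N i "Zpf t (pu t mu) (pv t mu) i" r] L(2)[OF ii1] S Fi1 mu Gp pb(5)[OF i1] N0 i
    unfolding cdef by auto
  obtain k where k: "i = Suc k" using Suc_le_D[of 0 i] i1 by auto
  have "k \<le> r" using k i by simp
  then have "t * v k \<le> t * (N * gv t mu k)" using up t by (simp add: mult_left_mono)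
  moreover have "u i > 0" using Fi by simp
  ultimately have "Zpf t u v i \<le> N * Gz' t mu i" using k by (simp add: Zpf_def Gz'_def algebra_simps)
  then show "c * Gz' t mu i \<le> Zpf t u v i \<and> Zpf t u v i \<le> N * Gz' t mu i" using lz' by simp
qed

lemma ln_over_ln_0: "((\<lambda>t::real. (c::real) / ln t) \<longlongrightarrow> 0) at_top"
  by (rule tendsto_divide_0[OF tendsto_const]) (rule filterlim_at_top_imp_at_infinity[OF ln_at_top])

lemma hv_squeeze:
  assumes hG: "has_val G a" and c: "c > 0" and C: "C > 0"
    and ev: "\<forall>\<^sub>F t in at_top. G t > 0 \<and> c * G t \<le> f t \<and> f t \<le> C * G t"
  shows "has_val f a"
  unfolding has_val_def
proof (rule tendsto_sandwich)
  have G: "((\<lambda>t. ln \<bar>G t\<bar> / ln t) \<longlongrightarrow> a) at_top" using hG unfolding has_val_def .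
  show "((\<lambda>t. ln c / ln t + ln \<bar>G t\<bar> / ln t) \<longlongrightarrow> a) at_top"
    using tendsto_add[OF ln_over_ln_0 G] by simp
  show "((\<lambda>t. ln C / ln t + ln \<bar>G t\<bar> / ln t) \<longlongrightarrow> a) at_top"
    using tendsto_add[OF ln_over_ln_0 G] by simp
  show "\<forall>\<^sub>F t in at_top. ln c / ln t + ln \<bar>G t\<bar> / ln t \<le> ln \<bar>f t\<bar> / ln t"
    using ev eventually_gt_at_top[of 1]
  proof eventually_elim
    case (elim t)
    then have "c * G t > 0" using c by simp
    then have "ln (c * G t) \<le> ln (f t)" using elim by (subst ln_le_cancel_iff) auto
    then have "ln c + ln (G t) \<le> ln (f t)" using c elim by (simp add: ln_mult)
    moreover have "ln t > 0" using elim by simp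
    moreover have "\<bar>f t\<bar> = f t" using \<open>c * G t > 0\<close> elim by simp
    ultimately show ?case using elim c by (simp add: add_divide_distrib[symmetric] divide_right_mono)
  qed
  show "\<forall>\<^sub>F t in at_top. ln \<bar>f t\<bar> / ln t \<le> ln C / ln t + ln \<bar>G t\<bar> / ln t"
    using ev eventually_gt_at_top[of 1]
  proof eventually_elim
    case (elim t)
    then have "f t > 0" using c by (smt (verit) mult_pos_pos)
    then have "ln (f t) \<le> ln (C * G t)" using C elim by (subst ln_le_cancel_iff) auto
    then have "ln (f t) \<le> ln C + ln (G t)" using C elim by (simp add: ln_mult)
    moreover have "ln t > 0" using elim by simp
    ultimately show ?case using elim \<open>f t > 0\<close> by (simp add: add_divide_distrib[symmetric] divide_right_mono)
  qed
qed

lemma hv_powr: "has_val (\<lambda>t. t powr a) a"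
  unfolding has_val_def
proof (rule Lim_transform_eventually[OF tendsto_const])
  show "\<forall>\<^sub>F t::real in at_top. a = ln \<bar>t powr a\<bar> / ln t"
    using eventually_gt_at_top[of 1] by eventually_elim (simp add: ln_powr)
qed

lemma hv_t: "has_val (\<lambda>t. t) 1"
  unfolding has_val_def
proof (rule Lim_transform_eventually[OF tendsto_const])
  show "\<forall>\<^sub>F t::real in at_top. 1 = ln \<bar>t\<bar> / ln t"
    using eventually_gt_at_top[of 1] by eventually_elim simp
qed

lemma hv_t2: "has_val (\<lambda>t. t^2) 2"
  unfolding has_val_def
proof (rule Lim_transform_eventually[OF tendsto_const])
  show "\<forall>\<^sub>F t::real in at_top. 2 = ln \<bar>t^2\<bar> / ln t"
    using eventually_gt_at_top[of 1] by eventually_elim (simp add: ln_realpow)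
qed

lemma hv_mult:
  assumes "has_val f a" "has_val g b" "\<forall>\<^sub>F t in at_top. f t > 0 \<and> g t > 0"
  shows "has_val (\<lambda>t. f t * g t) (a + b)"
  unfolding has_val_def
proof (rule Lim_transform_eventually[OF tendsto_add[OF assms(1,2)[unfolded has_val_def]]])
  show "\<forall>\<^sub>F t in at_top. ln \<bar>f t\<bar> / ln t + ln \<bar>g t\<bar> / ln t = ln \<bar>f t * g t\<bar> / ln t"
    using assms(3) by eventually_elim (simp add: ln_mult add_divide_distrib)
qed

lemma hv_min:
  assumes "has_val f a" "has_val g b" "\<forall>\<^sub>F t in at_top. f t > 0 \<and> g t > 0"
  shows "has_val (\<lambda>t. min (f t) (g t)) (min a b)"
  unfolding has_val_def
proof (rule Lim_transform_eventually[OF tendsto_min[OF assms(1,2)[unfolded has_val_def]]])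
  show "\<forall>\<^sub>F t in at_top. min (ln \<bar>f t\<bar> / ln t) (ln \<bar>g t\<bar> / ln t) = ln \<bar>min (f t) (g t)\<bar> / ln t"
    using assms(3) eventually_gt_at_top[of 1]
  proof eventually_elim
    case (elim t)
    then have "ln t > 0" by simp
    show ?case
    proof (cases "f t \<le> g t")
      case True
      then have "ln (f t) / ln t \<le> ln (g t) / ln t" using elim \<open>ln t > 0\<close> by (intro divide_right_mono) auto
      then show ?thesis using True elim by (simp add: min_def)
    next
      case False
      then have "ln (g t) / ln t < ln (f t) / ln t" using elim \<open>ln t > 0\<close> by (intro divide_strict_right_mono) auto
      then show ?thesis using False elim by (simp add: min_def)
    qed
  qed
qed

lemma hv_max:
  assumes "has_val f a" "has_val g b" "\<forall>\<^sub>F t in at_top. f t > 0 \<and> g t > 0"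
  shows "has_val (\<lambda>t. max (f t) (g t)) (max a b)"
  unfolding has_val_def
proof (rule Lim_transform_eventually[OF tendsto_max[OF assms(1,2)[unfolded has_val_def]]])
  show "\<forall>\<^sub>F t in at_top. max (ln \<bar>f t\<bar> / ln t) (ln \<bar>g t\<bar> / ln t) = ln \<bar>max (f t) (g t)\<bar> / ln t"
    using assms(3) eventually_gt_at_top[of 1]
  proof eventually_elim
    case (elim t)
    then have "ln t > 0" by simp
    show ?case
    proof (cases "f t \<le> g t")
      case True
      then have "ln (f t) / ln t \<le> ln (g t) / ln t" using elim \<open>ln t > 0\<close> by (intro divide_right_mono) auto
      then show ?thesis using True elim by (simp add: max_def)
    next
      case False
      then have "ln (g t) / ln t < ln (f t) / ln t" using elim \<open>ln t > 0\<close> by (intro divide_strict_right_mono) auto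
      then show ?thesis using False elim by (simp add: max_def)
    qed
  qed
qed

lemma hv_add:
  assumes "has_val f a" "has_val g b" "\<forall>\<^sub>F t in at_top. f t > 0 \<and> g t > 0"
  shows "has_val (\<lambda>t. f t + g t) (max a b)"
proof (rule hv_squeeze[OF hv_max[OF assms], of 1 2])
  show "\<forall>\<^sub>F t in at_top. max (f t) (g t) > 0 \<and> 1 * max (f t) (g t) \<le> f t + g t \<and> f t + g t \<le> 2 * max (f t) (g t)"
    using assms(3) by eventually_elim auto
qed auto

lemma hv_cmult:
  assumes "has_val f a" "\<forall>\<^sub>F t in at_top. f t > 0" "c > 0"
  shows "has_val (\<lambda>t. c * f t) a"
  by (rule hv_squeeze[OF assms(1), of c c]) (use assms in \<open>auto elim: eventually_mono\<close>)


lemma g_val: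
  "has_val (\<lambda>t. gu t (t powr lam) i) (u_trop lam i) \<and> has_val (\<lambda>t. gv t (t powr lam) i) (v_trop lam i)"
proof (induction i)
  case 0
  have "has_val (\<lambda>t. min (t^2) (t powr lam)) (min 2 lam)"
    by (rule hv_min[OF hv_t2 hv_powr]) (use eventually_gt_at_top[of 0] in \<open>auto elim: eventually_mono\<close>)
  then show ?case using hv_t by (simp add: gu_simps gv_simps u_trop_def v_trop_def)
next
  case (Suc i)
  have pos: "\<forall>\<^sub>F t in at_top. gu t (t powr lam) i > 0 \<and> gv t (t powr lam) i > 0"
    using eventually_gt_at_top[of 0] by eventually_elim (rule g_pos, auto)
  have m: "has_val (\<lambda>t. min (gu t (t powr lam) i) (gv t (t powr lam) i)) (min (u_trop lam i) (v_trop lam i))"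
    using hv_min[OF Suc[THEN conjunct1] Suc[THEN conjunct2] pos] .
  have "has_val (\<lambda>t. t * min (gu t (t powr lam) i) (gv t (t powr lam) i)) (1 + min (u_trop lam i) (v_trop lam i))"
    by (rule hv_mult[OF hv_t m]) (use pos eventually_gt_at_top[of 0] in \<open>eventually_elim, auto\<close>)
  moreover
  have s: "has_val (\<lambda>t. gu t (t powr lam) i + gv t (t powr lam) i) (max (u_trop lam i) (v_trop lam i))"
    using hv_add[OF Suc[THEN conjunct1] Suc[THEN conjunct2] pos] .
  have "has_val (\<lambda>t. coef t (Suc i) * (gu t (t powr lam) i + gv t (t powr lam) i))
           ((1 - 1 / 2 ^ Suc i) + max (u_trop lam i) (v_trop lam i))"
    unfolding coef_def
    by (rule hv_mult[OF hv_powr s]) (use pos eventually_gt_at_top[of 0] in \<open>eventually_elim, auto\<close>)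
  ultimately show ?case by (simp add: gu_simps gv_simps u_trop_def v_trop_def)
qed

lemma G_val:
  "has_val (\<lambda>t. Gz t (t powr lam) i) (z_trop lam i) \<and> has_val (\<lambda>t. Gh t (t powr lam) i) (h_trop lam i)
   \<and> has_val (\<lambda>t. Gz' t (t powr lam) i) (z'_trop lam i)"
proof -
  have pos: "\<forall>\<^sub>F t in at_top. gu t (t powr lam) j > 0 \<and> gv t (t powr lam) j > 0" for j
    using eventually_gt_at_top[of 0] by eventually_elim (rule g_pos, auto)
  have tp: "\<forall>\<^sub>F t::real in at_top. t > 0" by (rule eventually_gt_at_top)
  have a: "has_val (\<lambda>t. Gz t (t powr lam) i) (z_trop lam i)"
  proof (cases i)
    case 0 then show ?thesis using hv_t by (simp add: Gz_def z_trop_def)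
  next
    case (Suc k)
    have "has_val (\<lambda>t. t * gu t (t powr lam) k) (1 + u_trop lam k)"
      by (rule hv_mult[OF hv_t g_val[THEN conjunct1]]) (use pos[of k] tp in \<open>eventually_elim, auto\<close>)
    then show ?thesis using Suc by (simp add: Gz_def z_trop_def)
  qed
  have b: "has_val (\<lambda>t. Gh t (t powr lam) i) (h_trop lam i)"
  proof (cases i)
    case 0 then show ?thesis using hv_t2 by (simp add: Gh_def h_trop_def)
  next
    case (Suc k)
    then show ?thesis using g_val[of lam i] by (simp add: Gh_def h_trop_def)
  qed
  have c: "has_val (\<lambda>t. Gz' t (t powr lam) i) (z'_trop lam i)"
    unfolding Gz'_def z'_trop_def
    by (rule hv_mult[OF hv_t g_val[THEN conjunct2]]) (use pos[of "i-1"] tp in \<open>eventually_elim, auto\<close>)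
  show ?thesis using a b c by simp
qed



definition feasS :: "nat \<Rightarrow> real \<Rightarrow> (nat \<Rightarrow> real) \<Rightarrow> (nat \<Rightarrow> real) \<Rightarrow> bool" where
  "feasS r t u v \<longleftrightarrow> (\<forall>i\<in>{0..r}. u i > 0 \<and> v i > 0 \<and> Zf t u i > 0 \<and> Hf t u v i > 0 \<and>
      (i \<ge> 1 \<longrightarrow> Zpf t u v i > 0))"

definition Lt :: "real \<Rightarrow> (nat \<Rightarrow> real) \<Rightarrow> (nat \<Rightarrow> real) \<Rightarrow> nat \<Rightarrow> real" where
  "Lt t u v i = ln (u i) + ln (v i) + ln (Zf t u i) + ln (Hf t u v i) + (if i = 0 then 0 else ln (Zpf t u v i))"

definition Phi :: "nat \<Rightarrow> real \<Rightarrow> real \<Rightarrow> (nat \<Rightarrow> real) \<Rightarrow> (nat \<Rightarrow> real) \<Rightarrow> real" where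
  "Phi r t mu u v = v 0 / mu - (\<Sum>i=0..r. Lt t u v i)"

lemma feasS_D: "feasS r t u v \<Longrightarrow> i \<le> r \<Longrightarrow> u i > 0 \<and> v i > 0 \<and> Zf t u i > 0 \<and> Hf t u v i > 0 \<and>
      (i \<ge> 1 \<longrightarrow> Zpf t u v i > 0)"
  unfolding feasS_def by auto

lemma coef_le: "t \<ge> 1 \<Longrightarrow> coef t i \<le> t"
proof -
  assume t: "t \<ge> 1"
  have "t powr (1 - 1 / 2 ^ i) \<le> t powr 1" by (rule powr_mono) (use t in auto)
  thus ?thesis using t by (simp add: coef_def)
qed

lemma feas_bound_aux:
  assumes t: "t \<ge> 1" and f: "feasS r t u v"
  shows "i \<le> r \<Longrightarrow> u i \<le> t^2 * (2*t)^i \<and> v i \<le> t^2 * (2*t)^i"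
proof (induction i)
  case 0
  have "u 0 < t" "v 0 < t^2" using feasS_D[OF f, of 0] by (auto simp: Zf_def Hf_def)
  moreover have "t \<le> t^2" using t by (simp add: power2_eq_square)
  ultimately show ?case by simp
next
  case (Suc k)
  then have IH: "u k \<le> t^2 * (2*t)^k" "v k \<le> t^2 * (2*t)^k" by auto
  have f1: "Zf t u (Suc k) > 0" "Hf t u v (Suc k) > 0" "Zpf t u v (Suc k) > 0" "u k > 0" "v k > 0"
    using feasS_D[OF f, of "Suc k"] feasS_D[OF f, of k] Suc by auto
  have c: "coef t (Suc k) \<le> t" "coef t (Suc k) > 0" using coef_le t coef_pos[of t] by auto
  have "u (Suc k) < t * u k" using f1 by (simp add: Zf_def)
  also have "\<dots> \<le> t * (t^2 * (2*t)^k)" using IH t by (simp add: mult_left_mono)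
  also have "\<dots> \<le> t^2 * (2*t)^Suc k" using t by (simp add: algebra_simps)
  finally have A: "u (Suc k) \<le> t^2 * (2*t)^Suc k" by simp
  have "v (Suc k) < coef t (Suc k) * (u k + v k)" using f1 by (simp add: Hf_def)
  also have "\<dots> \<le> t * (u k + v k)" using c f1 by (intro mult_right_mono) auto
  also have "\<dots> \<le> t * (2 * (t^2 * (2*t)^k))" using IH t by (intro mult_left_mono) auto
  also have "\<dots> = t^2 * (2*t)^Suc k" by (simp add: algebra_simps)
  finally show ?case using A by simp
qed

lemma feas_bound:
  assumes t: "t \<ge> 1" and f: "feasS r t u v" and i: "i \<le> r"
  defines "R \<equiv> t^2 * (2*t)^r"
  shows "u i \<le> R \<and> v i \<le> R \<and> Zf t u i \<le> R \<and> Hf t u v i \<le> R \<and> (i \<ge> 1 \<longrightarrow> Zpf t u v i \<le> R)"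
proof -
  have mono: "t^2 * (2*t)^j \<le> R" if "j \<le> r" for j
    unfolding R_def using t that by (intro mult_left_mono power_increasing) auto
  have ui: "u i \<le> R" "v i \<le> R" using feas_bound_aux[OF t f i] mono[OF i] by auto
  have fi: "u i > 0" "v i > 0" using feasS_D[OF f i] by auto
  have t2: "t \<le> t^2" using t by (simp add: power2_eq_square)
  have z: "Zf t u i \<le> R"
  proof (cases i)
    case 0 then show ?thesis using fi t2 mono[of 0] by (simp add: Zf_def)
  next
    case (Suc k)
    have "t * u k \<le> t * (t^2 * (2*t)^k)" using feas_bound_aux[OF t f, of k] Suc i t by (intro mult_left_mono) auto
    also have "\<dots> \<le> t^2 * (2*t)^Suc k" using t by (simp add: algebra_simps)
    finally show ?thesis using fi mono[OF i] Suc by (simp add: Zf_def)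
  qed
  have h: "Hf t u v i \<le> R"
  proof (cases i)
    case 0 then show ?thesis using fi mono[of 0] by (simp add: Hf_def)
  next
    case (Suc k)
    have c: "coef t (Suc k) \<le> t" "coef t (Suc k) > 0" using coef_le t coef_pos[of t] by auto
    have uk: "u k > 0" "v k > 0" using feasS_D[OF f, of k] Suc i by auto
    have "coef t (Suc k) * (u k + v k) \<le> t * (u k + v k)" using c uk by (intro mult_right_mono) auto
    also have "\<dots> \<le> t * (2 * (t^2 * (2*t)^k))" using feas_bound_aux[OF t f, of k] Suc i t by (intro mult_left_mono) auto
    also have "\<dots> = t^2 * (2*t)^Suc k" by (simp add: algebra_simps)
    finally show ?thesis using fi mono[OF i] Suc by (simp add: Hf_def)
  qed
  have zp: "i \<ge> 1 \<longrightarrow> Zpf t u v i \<le> R"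
  proof
    assume i1: "i \<ge> 1"
    obtain k where Suc: "i = Suc k" using Suc_le_D[of 0 i] i1 by auto
    have "t * v k \<le> t * (t^2 * (2*t)^k)" using feas_bound_aux[OF t f, of k] Suc i t by (intro mult_left_mono) auto
    also have "\<dots> \<le> t^2 * (2*t)^Suc k" using t by (simp add: algebra_simps)
    finally show "Zpf t u v i \<le> R" using fi mono[OF i] Suc by (simp add: Zpf_def)
  qed
  show ?thesis using ui z h zp by simp
qed

lemma R_ge1: "t \<ge> 1 \<Longrightarrow> (1::real) \<le> t^2 * (2*t)^r"
proof -
  assume t: "t \<ge> 1"
  have "1 \<le> t^2" using t by (simp add: one_le_power)
  moreover have "1 \<le> (2*t)^r" by (rule one_le_power) (use t in simp)
  ultimately show ?thesis using mult_mono[of 1 "t^2" 1 "(2*t)^r"] by simp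
qed

lemma ln_le_R: "0 < (q::real) \<Longrightarrow> q \<le> R \<Longrightarrow> ln q \<le> ln R"
  by (subst ln_le_cancel_iff) auto

definition bad :: "nat \<Rightarrow> real \<Rightarrow> real \<Rightarrow> (nat \<Rightarrow> real) \<Rightarrow> (nat \<Rightarrow> real) \<Rightarrow> nat \<Rightarrow> bool" where
  "bad r t \<delta> u v i \<longleftrightarrow> u i < \<delta> \<or> v i < \<delta> \<or> Zf t u i < \<delta> \<or> Hf t u v i < \<delta> \<or> (i \<ge> 1 \<and> Zpf t u v i < \<delta>)"

lemma Lt_bounds:
  assumes t: "t \<ge> 1" and f: "feasS r t u v" and i: "i \<le> r"
  defines "R \<equiv> t^2 * (2*t)^r"
  shows "Lt t u v i \<le> 5 * ln R"
    and "\<delta> > 0 \<Longrightarrow> bad r t \<delta> u v i \<Longrightarrow> Lt t u v i \<le> ln \<delta> + 4 * ln R"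
proof -
  have R1: "R \<ge> 1" unfolding R_def using R_ge1[OF t] .
  hence lR: "ln R \<ge> 0" by simp
  note fd = feasS_D[OF f i] and fb = feas_bound[OF t f i, folded R_def]
  have l: "ln (u i) \<le> ln R" "ln (v i) \<le> ln R" "ln (Zf t u i) \<le> ln R" "ln (Hf t u v i) \<le> ln R"
    "(if i = 0 then 0 else ln (Zpf t u v i)) \<le> ln R"
    using fd fb lR by auto
  show "Lt t u v i \<le> 5 * ln R" using l unfolding Lt_def by linarith
  assume d: "\<delta> > 0" and b: "bad r t \<delta> u v i"
  have lt: "q > 0 \<Longrightarrow> q < \<delta> \<Longrightarrow> ln q \<le> ln \<delta>" for q using d by simp
  from b show "Lt t u v i \<le> ln \<delta> + 4 * ln R"
    unfolding bad_def
  proof (elim disjE conjE)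
    assume "u i < \<delta>" then show ?thesis using lt[of "u i"] fd l unfolding Lt_def by linarith
  next
    assume "v i < \<delta>" then show ?thesis using lt[of "v i"] fd l unfolding Lt_def by linarith
  next
    assume "Zf t u i < \<delta>" then show ?thesis using lt[of "Zf t u i"] fd l unfolding Lt_def by linarith
  next
    assume "Hf t u v i < \<delta>" then show ?thesis using lt[of "Hf t u v i"] fd l unfolding Lt_def by linarith
  next
    assume "i \<ge> 1" "Zpf t u v i < \<delta>"
    have a: "ln (Zpf t u v i) \<le> ln \<delta>" using lt[of "Zpf t u v i"] fd \<open>Zpf t u v i < \<delta>\<close> \<open>i \<ge> 1\<close> by auto
    have "Lt t u v i = ln (u i) + ln (v i) + ln (Zf t u i) + ln (Hf t u v i) + ln (Zpf t u v i)"
      using \<open>i \<ge> 1\<close> by (simp add: Lt_def)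
    then show ?thesis using a l(1-4) by linarith
  qed
qed

lemma Phi_bad:
  assumes t: "t \<ge> 1" and mu: "mu > 0" and f: "feasS r t u v" and k: "k \<le> r" and d: "\<delta> > 0"
    and b: "bad r t \<delta> u v k"
  defines "R \<equiv> t^2 * (2*t)^r"
  shows "Phi r t mu u v \<ge> - ln \<delta> - (5 * real r + 4) * ln R"
proof -
  have kk: "k \<in> {0..r}" using k by simp
  have "(\<Sum>i=0..r. Lt t u v i) = Lt t u v k + (\<Sum>i\<in>{0..r}-{k}. Lt t u v i)"
    by (rule sum.remove[OF _ kk]) simp
  also have "\<dots> \<le> (ln \<delta> + 4 * ln R) + real (card ({0..r}-{k})) * (5 * ln R)"
  proof (rule add_mono)
    show "Lt t u v k \<le> ln \<delta> + 4 * ln R" using Lt_bounds(2)[OF t f k d b] unfolding R_def .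
    show "(\<Sum>i\<in>{0..r}-{k}. Lt t u v i) \<le> real (card ({0..r}-{k})) * (5 * ln R)"
      by (rule sum_bounded_above) (use Lt_bounds(1)[OF t f] in \<open>auto simp: R_def\<close>)
  qed
  also have "real (card ({0..r}-{k})) = real r" using kk by simp
  finally have "(\<Sum>i=0..r. Lt t u v i) \<le> ln \<delta> + (5 * real r + 4) * ln R" by (simp add: algebra_simps)
  moreover have "v 0 / mu \<ge> 0" using feasS_D[OF f, of 0] mu by simp
  ultimately show ?thesis unfolding Phi_def by linarith
qed

definition tr :: "nat \<Rightarrow> (nat \<Rightarrow> real) \<Rightarrow> nat \<Rightarrow> real" where
  "tr r u = (\<lambda>i. if i \<le> r then u i else 0)"

lemma tr_Zf: "i \<le> r \<Longrightarrow> Zf t (tr r u) i = Zf t u i" by (simp add: Zf_def tr_def)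
lemma tr_Hf: "i \<le> r \<Longrightarrow> Hf t (tr r u) (tr r v) i = Hf t u v i" by (simp add: Hf_def tr_def)
lemma tr_Zpf: "i \<le> r \<Longrightarrow> Zpf t (tr r u) (tr r v) i = Zpf t u v i" by (simp add: Zpf_def tr_def)
lemma tr_Lt: "i \<le> r \<Longrightarrow> Lt t (tr r u) (tr r v) i = Lt t u v i"
  by (simp add: Lt_def tr_Zf tr_Hf tr_Zpf) (simp add: tr_def)
lemma tr_feasS: "feasS r t (tr r u) (tr r v) = feasS r t u v"
  unfolding feasS_def by (auto simp: tr_Zf tr_Hf tr_Zpf) (auto simp: tr_def)
lemma tr_Phi: "Phi r t mu (tr r u) (tr r v) = Phi r t mu u v"
proof -
  have "(\<Sum>i=0..r. Lt t (tr r u) (tr r v) i) = (\<Sum>i=0..r. Lt t u v i)"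
    by (rule sum.cong) (auto simp: tr_Lt)
  then show ?thesis unfolding Phi_def by (simp add: tr_def)
qed
lemma tr_bad: "i \<le> r \<Longrightarrow> bad r t \<delta> (tr r u) (tr r v) i = bad r t \<delta> u v i"
  unfolding bad_def by (simp add: tr_Zf tr_Hf tr_Zpf) (simp add: tr_def)

lemma cont_fst [continuous_intros]: "continuous_on S (\<lambda>x::(nat \<Rightarrow> real) \<times> (nat \<Rightarrow> real). fst x i)"
  by (rule continuous_on_product_then_coordinatewise) (intro continuous_intros)
lemma cont_snd [continuous_intros]: "continuous_on S (\<lambda>x::(nat \<Rightarrow> real) \<times> (nat \<Rightarrow> real). snd x i)"
  by (rule continuous_on_product_then_coordinatewise) (intro continuous_intros)

lemma cont_Zf: "continuous_on S (\<lambda>x::(nat \<Rightarrow> real) \<times> (nat \<Rightarrow> real). Zf t (fst x) i)"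
  by (cases "i = 0") (simp_all add: Zf_def, (intro continuous_intros)+)
lemma cont_Hf: "continuous_on S (\<lambda>x::(nat \<Rightarrow> real) \<times> (nat \<Rightarrow> real). Hf t (fst x) (snd x) i)"
  by (cases "i = 0") (simp_all add: Hf_def, (intro continuous_intros)+)
lemma cont_Zpf: "continuous_on S (\<lambda>x::(nat \<Rightarrow> real) \<times> (nat \<Rightarrow> real). Zpf t (fst x) (snd x) i)"
  unfolding Zpf_def by (intro continuous_intros)

lemma compact_box: "compact (Pi UNIV (\<lambda>i. if i \<le> r then {0..R} else {0::real}))"
proof -
  have "compactin (product_topology (\<lambda>i. euclidean) UNIV) (PiE UNIV (\<lambda>i. if i \<le> r then {0..R} else {0::real}))"
    by (simp add: compactin_PiE)
  then show ?thesis by (simp add: euclidean_product_topology PiE_UNIV_domain)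
qed

lemma closed_good: "closed {x::(nat \<Rightarrow> real) \<times> (nat \<Rightarrow> real). \<forall>i. i \<le> r \<longrightarrow> \<delta> \<le> fst x i \<and> \<delta> \<le> snd x i \<and>
   \<delta> \<le> Zf t (fst x) i \<and> \<delta> \<le> Hf t (fst x) (snd x) i \<and> (1 \<le> i \<longrightarrow> \<delta> \<le> Zpf t (fst x) (snd x) i)}"
proof (rule closed_Collect_all)
  fix i
  show "closed {x::(nat \<Rightarrow> real) \<times> (nat \<Rightarrow> real). i \<le> r \<longrightarrow> \<delta> \<le> fst x i \<and> \<delta> \<le> snd x i \<and>
   \<delta> \<le> Zf t (fst x) i \<and> \<delta> \<le> Hf t (fst x) (snd x) i \<and> (1 \<le> i \<longrightarrow> \<delta> \<le> Zpf t (fst x) (snd x) i)}"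
  proof (cases "i \<le> r")
    case False then show ?thesis by simp
  next
    case True
    have c: "closed {x::(nat \<Rightarrow> real) \<times> (nat \<Rightarrow> real). \<delta> \<le> g x}" if "continuous_on UNIV g" for g
      by (rule closed_Collect_le[OF continuous_on_const that])
    have z: "closed {x::(nat \<Rightarrow> real) \<times> (nat \<Rightarrow> real). 1 \<le> i \<longrightarrow> \<delta> \<le> Zpf t (fst x) (snd x) i}"
      by (cases "1 \<le> i") (simp_all add: c cont_Zpf)
    show ?thesis using True
      by (simp only: True simp_thms, intro closed_Collect_conj c cont_fst cont_snd cont_Zf cont_Hf z)
  qed
qed

lemma exists_min:
  assumes t: "t \<ge> 1" and mu: "mu > 0"
  shows "\<exists>u v. feasS r t u v \<and> (\<forall>u' v'. feasS r t u' v' \<longrightarrow> Phi r t mu u v \<le> Phi r t mu u' v')"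
proof -
  have t0: "t > 0" using t by simp
  define R where "R = t^2 * (2*t)^r"
  define p1 where "p1 = pu t mu"
  define p2 where "p2 = pv t mu"
  have fp: "feasS r t p1 p2" unfolding feasS_def p1_def p2_def using p_feas[OF t0 mu] by auto
  define \<delta> where "\<delta> = exp (- (Phi r t mu p1 p2 + (5 * real r + 4) * ln R + 1))"
  have d0: "\<delta> > 0" unfolding \<delta>_def by simp
  have badPhi: "Phi r t mu u v \<ge> Phi r t mu p1 p2 + 1" if "feasS r t u v" "k \<le> r" "bad r t \<delta> u v k" for u v k
    using Phi_bad[OF t mu that(1,2) d0 that(3)] unfolding R_def[symmetric] \<delta>_def by simp
  have pgood: "\<not> bad r t \<delta> p1 p2 k" if "k \<le> r" for k
    using badPhi[OF fp that] by auto
  define A where "A = (\<lambda>i. if i \<le> r then {0..R} else {0::real})"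
  define G where "G = {x::(nat \<Rightarrow> real) \<times> (nat \<Rightarrow> real). \<forall>i. i \<le> r \<longrightarrow> \<delta> \<le> fst x i \<and> \<delta> \<le> snd x i \<and>
   \<delta> \<le> Zf t (fst x) i \<and> \<delta> \<le> Hf t (fst x) (snd x) i \<and> (1 \<le> i \<longrightarrow> \<delta> \<le> Zpf t (fst x) (snd x) i)}"
  define K where "K = (Pi UNIV A \<times> Pi UNIV A) \<inter> G"
  have cK: "compact K" unfolding K_def A_def G_def
    by (intro compact_Int_closed compact_Times compact_box closed_good)
  have goodG: "(u, v) \<in> G \<longleftrightarrow> (\<forall>i\<le>r. \<not> bad r t \<delta> u v i)" for u v
    unfolding G_def bad_def by (auto simp: not_less)
  have inK: "(tr r u, tr r v) \<in> K" if "feasS r t u v" "\<forall>i\<le>r. \<not> bad r t \<delta> u v i" for u v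
  proof -
    have "(tr r u, tr r v) \<in> G" using that(2) goodG tr_bad by simp
    moreover have "tr r u \<in> Pi UNIV A \<and> tr r v \<in> Pi UNIV A"
      using feas_bound[OF t that(1)] feasS_D[OF that(1)] unfolding A_def tr_def R_def
      by (auto simp: less_imp_le)
    ultimately show ?thesis unfolding K_def by auto
  qed
  have Kfeas: "feasS r t (fst x) (snd x)" if "x \<in> K" for x
  proof -
    have "\<forall>i\<le>r. \<not> bad r t \<delta> (fst x) (snd x) i" using that goodG[of "fst x" "snd x"] unfolding K_def by auto
    then show ?thesis unfolding feasS_def bad_def using d0 by (force simp: not_less)
  qed
  have Kne: "K \<noteq> {}" using inK[OF fp] pgood by auto
  have cPhi: "continuous_on K (\<lambda>x. Phi r t mu (fst x) (snd x))"
    unfolding Phi_def Lt_def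
    apply (intro continuous_intros cont_Zf cont_Hf cont_Zpf ballI)
    subgoal using mu by simp
    subgoal for i x using feasS_D[OF Kfeas, of x i] by auto
    subgoal for i x using feasS_D[OF Kfeas, of x i] by auto
    subgoal for i x using feasS_D[OF Kfeas, of x i] by auto
    subgoal for i x using feasS_D[OF Kfeas, of x i] by auto
    subgoal premises prems for i
    proof (cases "i = 0")
      case True then show ?thesis by simp
    next
      case False
      have "\<forall>x\<in>K. Zpf t (fst x) (snd x) i \<noteq> 0" using feasS_D[OF Kfeas] prems False by fastforce
      then show ?thesis using False by (simp, intro continuous_intros cont_Zpf) auto
    qed
    done
  obtain xs where xs: "xs \<in> K" "\<forall>y\<in>K. Phi r t mu (fst xs) (snd xs) \<le> Phi r t mu (fst y) (snd y)"
    using continuous_attains_inf[OF cK Kne cPhi] by blast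
  have "Phi r t mu (fst xs) (snd xs) \<le> Phi r t mu u' v'" if f': "feasS r t u' v'" for u' v'
  proof (cases "\<exists>k\<le>r. bad r t \<delta> u' v' k")
    case True
    then obtain k where "k \<le> r" "bad r t \<delta> u' v' k" by blast
    then have "Phi r t mu u' v' \<ge> Phi r t mu p1 p2 + 1" using badPhi f' by blast
    moreover have "Phi r t mu (fst xs) (snd xs) \<le> Phi r t mu p1 p2"
      using xs(2) inK[OF fp] pgood tr_Phi by fastforce
    ultimately show ?thesis by simp
  next
    case False
    then show ?thesis using xs(2) inK[OF f'] tr_Phi by fastforce
  qed
  then show ?thesis using Kfeas[OF xs(1)] by blast
qed

definition Zl where "Zl t du i = (if i = 0 then - du 0 else t * du (i-1) - du i)"
definition Hl where "Hl t du dv i = (if i = 0 then - dv 0 else coef t i * (du (i-1) + dv (i-1)) - dv i)"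
definition Zpl where "Zpl t du dv i = t * dv (i-1) - du i"
definition pert :: "(nat \<Rightarrow> real) \<Rightarrow> (nat \<Rightarrow> real) \<Rightarrow> real \<Rightarrow> nat \<Rightarrow> real" where
  "pert u du e = (\<lambda>i. u i + e * du i)"

lemma pert_Zf: "Zf t (pert u du e) i = Zf t u i + e * Zl t du i"
  by (simp add: Zf_def Zl_def pert_def algebra_simps)
lemma pert_Hf: "Hf t (pert u du e) (pert v dv e) i = Hf t u v i + e * Hl t du dv i"
  by (simp add: Hf_def Hl_def pert_def algebra_simps)
lemma pert_Zpf: "Zpf t (pert u du e) (pert v dv e) i = Zpf t u v i + e * Zpl t du dv i"
  by (simp add: Zpf_def Zpl_def pert_def algebra_simps)
lemma pert_0: "pert u du 0 = u" by (simp add: pert_def)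

lemma dln: "a > 0 \<Longrightarrow> ((\<lambda>e. ln (a + e * b)) has_real_derivative b / a) (at 0)"
  by (auto intro!: derivative_eq_intros simp: field_simps)

lemma deriv_Phi:
  assumes f: "feasS r t u v" and mu: "mu > 0"
  shows "((\<lambda>e. Phi r t mu (pert u du e) (pert v dv e)) has_real_derivative
     (dv 0 / mu - (\<Sum>i=0..r. du i / u i + dv i / v i + Zl t du i / Zf t u i + Hl t du dv i / Hf t u v i
        + (if i = 0 then 0 else Zpl t du dv i / Zpf t u v i)))) (at 0)"
proof -
  have eq: "(\<lambda>e. Phi r t mu (pert u du e) (pert v dv e)) = (\<lambda>e. (v 0 + e * dv 0) / mu - (\<Sum>i=0..r.
      ln (u i + e * du i) + ln (v i + e * dv i) + ln (Zf t u i + e * Zl t du i) + ln (Hf t u v i + e * Hl t du dv i)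
      + (if i = 0 then 0 else ln (Zpf t u v i + e * Zpl t du dv i))))"
    unfolding Phi_def Lt_def pert_Zf pert_Hf pert_Zpf by (simp add: pert_def)
  show ?thesis unfolding eq
  proof (intro DERIV_diff DERIV_sum DERIV_add)
    show "((\<lambda>e. (v 0 + e * dv 0) / mu) has_real_derivative dv 0 / mu) (at 0)"
      using mu by (auto intro!: derivative_eq_intros)
    fix i assume i: "i \<in> {0..r}"
    note fd = feasS_D[OF f, of i]
    show "((\<lambda>e. ln (u i + e * du i)) has_real_derivative du i / u i) (at 0)"
      using fd i by (intro dln) auto
    show "((\<lambda>e. ln (v i + e * dv i)) has_real_derivative dv i / v i) (at 0)"
      using fd i by (intro dln) auto
    show "((\<lambda>e. ln (Zf t u i + e * Zl t du i)) has_real_derivative Zl t du i / Zf t u i) (at 0)"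
      using fd i by (intro dln) auto
    show "((\<lambda>e. ln (Hf t u v i + e * Hl t du dv i)) has_real_derivative Hl t du dv i / Hf t u v i) (at 0)"
      using fd i by (intro dln) auto
    show "((\<lambda>e. if i = 0 then 0 else ln (Zpf t u v i + e * Zpl t du dv i)) has_real_derivative
        (if i = 0 then 0 else Zpl t du dv i / Zpf t u v i)) (at 0)"
    proof (cases "i = 0")
      case True then show ?thesis by simp
    next
      case False then show ?thesis using fd i by (simp, intro dln) auto
    qed
  qed
qed

lemma ev_pos: "a > 0 \<Longrightarrow> \<forall>\<^sub>F e in nhds (0::real). a + e * b > 0"
  unfolding eventually_nhds_metric
proof (intro exI conjI allI impI)
  assume a: "a > 0"
  show "a / (\<bar>b\<bar> + 1) > 0" using a by simp
  fix e :: real assume "dist e 0 < a / (\<bar>b\<bar> + 1)"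
  then have "\<bar>e\<bar> * (\<bar>b\<bar> + 1) < a" by (simp add: field_simps)
  moreover have "\<bar>e * b\<bar> \<le> \<bar>e\<bar> * (\<bar>b\<bar> + 1)" by (simp add: abs_mult mult_left_mono)
  ultimately show "a + e * b > 0" by linarith
qed

lemma feas_pert:
  assumes f: "feasS r t u v"
  shows "\<forall>\<^sub>F e in nhds 0. feasS r t (pert u du e) (pert v dv e)"
  unfolding feasS_def pert_Zf pert_Hf pert_Zpf
proof (rule eventually_ball_finite, simp, rule ballI)
  fix i assume i: "i \<in> {0..r}"
  note fd = feasS_D[OF f, of i]
  have z: "\<forall>\<^sub>F e in nhds 0. (1 \<le> i \<longrightarrow> 0 < Zpf t u v i + e * Zpl t du dv i)"
    by (cases "1 \<le> i") (use fd i in \<open>auto intro: ev_pos\<close>)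
  show "\<forall>\<^sub>F e in nhds 0. 0 < pert u du e i \<and> 0 < pert v dv e i \<and> 0 < Zf t u i + e * Zl t du i \<and>
           0 < Hf t u v i + e * Hl t du dv i \<and> (1 \<le> i \<longrightarrow> 0 < Zpf t u v i + e * Zpl t du dv i)"
    unfolding pert_def using fd i by (intro eventually_conj ev_pos z) auto
qed

lemma stationary:
  assumes f: "feasS r t u v" and mu: "mu > 0"
    and min: "\<forall>u' v'. feasS r t u' v' \<longrightarrow> Phi r t mu u v \<le> Phi r t mu u' v'"
  shows "dv 0 / mu - (\<Sum>i=0..r. du i / u i + dv i / v i + Zl t du i / Zf t u i + Hl t du dv i / Hf t u v i
        + (if i = 0 then 0 else Zpl t du dv i / Zpf t u v i)) = 0"
proof -
  obtain d where d: "d > 0" "\<forall>e. dist e 0 < d \<longrightarrow> feasS r t (pert u du e) (pert v dv e)"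
    using feas_pert[OF f, of du dv] unfolding eventually_nhds_metric by blast
  show ?thesis
  proof (rule DERIV_local_min[OF deriv_Phi[OF f mu] d(1)])
    show "\<forall>y. \<bar>0 - y\<bar> < d \<longrightarrow> Phi r t mu (pert u du 0) (pert v dv 0) \<le> Phi r t mu (pert u du y) (pert v dv y)"
      using d(2) min by (simp add: pert_0 dist_real_def)
  qed
qed

lemma stat_u:
  assumes f: "feasS r t u v" and mu: "mu > 0"
    and min: "\<forall>u' v'. feasS r t u' v' \<longrightarrow> Phi r t mu u v \<le> Phi r t mu u' v'" and j: "j \<le> r"
  shows "1 / u j - 1 / Zf t u j - (if j = 0 then 0 else 1 / Zpf t u v j)
     + (if j < r then t / Zf t u (Suc j) + coef t (Suc j) / Hf t u v (Suc j) else 0) = 0"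
proof -
  define du where "du = (\<lambda>i. if i = j then 1 else (0::real))"
  define dv where "dv = (\<lambda>i::nat. (0::real))"
  have st: "dv 0 / mu - (\<Sum>i=0..r. du i / u i + dv i / v i + Zl t du i / Zf t u i + Hl t du dv i / Hf t u v i
        + (if i = 0 then 0 else Zpl t du dv i / Zpf t u v i)) = 0"
    by (rule stationary[OF f mu min])
  have trm: "du i / u i + dv i / v i + Zl t du i / Zf t u i + Hl t du dv i / Hf t u v i
        + (if i = 0 then 0 else Zpl t du dv i / Zpf t u v i)
      = (if i = j then 1 / u i - 1 / Zf t u i - (if i = 0 then 0 else 1 / Zpf t u v i) else 0)
        + (if i = Suc j then t / Zf t u i + coef t i / Hf t u v i else 0)" for i
    by (cases "i = 0"; cases "i = j"; cases "i = Suc j") (auto simp: du_def dv_def Zl_def Hl_def Zpl_def)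
  have "(\<Sum>i=0..r. du i / u i + dv i / v i + Zl t du i / Zf t u i + Hl t du dv i / Hf t u v i
        + (if i = 0 then 0 else Zpl t du dv i / Zpf t u v i))
     = (\<Sum>i=0..r. (if i = j then 1 / u i - 1 / Zf t u i - (if i = 0 then 0 else 1 / Zpf t u v i) else 0))
       + (\<Sum>i=0..r. (if i = Suc j then t / Zf t u i + coef t i / Hf t u v i else 0))"
    unfolding trm by (rule sum.distrib)
  also have "\<dots> = 1 / u j - 1 / Zf t u j - (if j = 0 then 0 else 1 / Zpf t u v j)
     + (if j < r then t / Zf t u (Suc j) + coef t (Suc j) / Hf t u v (Suc j) else 0)"
    using j by (simp add: sum.delta)
  finally show ?thesis using st by (simp add: dv_def)
qed

lemma stat_v:
  assumes f: "feasS r t u v" and mu: "mu > 0"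
    and min: "\<forall>u' v'. feasS r t u' v' \<longrightarrow> Phi r t mu u v \<le> Phi r t mu u' v'" and j: "j \<le> r"
  shows "(if j = 0 then 1 / mu else 0) - (1 / v j - 1 / Hf t u v j
     + (if j < r then coef t (Suc j) / Hf t u v (Suc j) + t / Zpf t u v (Suc j) else 0)) = 0"
proof -
  define dv where "dv = (\<lambda>i. if i = j then 1 else (0::real))"
  define du where "du = (\<lambda>i::nat. (0::real))"
  have st: "dv 0 / mu - (\<Sum>i=0..r. du i / u i + dv i / v i + Zl t du i / Zf t u i + Hl t du dv i / Hf t u v i
        + (if i = 0 then 0 else Zpl t du dv i / Zpf t u v i)) = 0"
    by (rule stationary[OF f mu min])
  have trm: "du i / u i + dv i / v i + Zl t du i / Zf t u i + Hl t du dv i / Hf t u v i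
        + (if i = 0 then 0 else Zpl t du dv i / Zpf t u v i)
      = (if i = j then 1 / v i - 1 / Hf t u v i else 0)
        + (if i = Suc j then coef t i / Hf t u v i + t / Zpf t u v i else 0)" for i
    by (cases "i = 0"; cases "i = j"; cases "i = Suc j") (auto simp: du_def dv_def Zl_def Hl_def Zpl_def)
  have "(\<Sum>i=0..r. du i / u i + dv i / v i + Zl t du i / Zf t u i + Hl t du dv i / Hf t u v i
        + (if i = 0 then 0 else Zpl t du dv i / Zpf t u v i))
     = (\<Sum>i=0..r. (if i = j then 1 / v i - 1 / Hf t u v i else 0))
       + (\<Sum>i=0..r. (if i = Suc j then coef t i / Hf t u v i + t / Zpf t u v i else 0))"
    unfolding trm by (rule sum.distrib)
  also have "\<dots> = 1 / v j - 1 / Hf t u v j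
     + (if j < r then coef t (Suc j) / Hf t u v (Suc j) + t / Zpf t u v (Suc j) else 0)"
    using j by (simp add: sum.delta)
  finally have e: "(\<Sum>i=0..r. du i / u i + dv i / v i + Zl t du i / Zf t u i + Hl t du dv i / Hf t u v i
        + (if i = 0 then 0 else Zpl t du dv i / Zpf t u v i)) = 1 / v j - 1 / Hf t u v j
     + (if j < r then coef t (Suc j) / Hf t u v (Suc j) + t / Zpf t u v (Suc j) else 0)" .
  have "dv 0 / mu = (if j = 0 then 1 / mu else 0)" by (simp add: dv_def)
  then show ?thesis using st unfolding e by simp
qed

lemma cp_exists1:
  assumes t: "t \<ge> 1" and mu: "mu > 0"
  shows "\<exists>u v. cp_system r t mu u v (Zf t u) (Zpf t u v) (Hf t u v) (\<lambda>i. mu / Zf t u i)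
     (\<lambda>i. mu / Zpf t u v i) (\<lambda>i. mu / Hf t u v i) (\<lambda>i. mu / u i) (\<lambda>i. mu / v i)"
proof -
  obtain u v where f: "feasS r t u v" and min: "\<forall>u' v'. feasS r t u' v' \<longrightarrow> Phi r t mu u v \<le> Phi r t mu u' v'"
    using exists_min[OF t mu] by blast
  have su: "mu / u i = (if i = 0 then mu / Zf t u 0 else mu / Zf t u i + mu / Zpf t u v i)
               - (if i < r then t * (mu / Zf t u (i + 1)) + coef t (i + 1) * (mu / Hf t u v (i + 1)) else 0)"
    if i: "i \<in> {0..r}" for i
  proof -
    have e: "1 / u i = 1 / Zf t u i + (if i = 0 then 0 else 1 / Zpf t u v i)
     - (if i < r then t / Zf t u (Suc i) + coef t (Suc i) / Hf t u v (Suc i) else 0)"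
      using stat_u[OF f mu min, of i] i by simp
    have "mu / u i = mu * (1 / u i)" by simp
    also have "\<dots> = mu * (1 / Zf t u i + (if i = 0 then 0 else 1 / Zpf t u v i)
     - (if i < r then t / Zf t u (Suc i) + coef t (Suc i) / Hf t u v (Suc i) else 0))" using e by simp
    finally show ?thesis by (cases "i = 0"; cases "i < r") (simp_all add: algebra_simps)
  qed
  have sv: "mu / v i = (if i = 0 then 1 else 0) + mu / Hf t u v i
               - (if i < r then t * (mu / Zpf t u v (i + 1)) + coef t (i + 1) * (mu / Hf t u v (i + 1)) else 0)"
    if i: "i \<in> {0..r}" for i
  proof -
    have e: "1 / v i = (if i = 0 then 1 / mu else 0) + 1 / Hf t u v i
     - (if i < r then coef t (Suc i) / Hf t u v (Suc i) + t / Zpf t u v (Suc i) else 0)"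
      using stat_v[OF f mu min, of i] i by simp
    have "mu / v i = mu * (1 / v i)" by simp
    also have "\<dots> = mu * ((if i = 0 then 1 / mu else 0) + 1 / Hf t u v i
     - (if i < r then coef t (Suc i) / Hf t u v (Suc i) + t / Zpf t u v (Suc i) else 0))" using e by simp
    finally show ?thesis using mu by (cases "i = 0"; cases "i < r") (simp_all add: algebra_simps)
  qed
  have fd: "\<And>i. i \<in> {0..r} \<Longrightarrow> u i > 0 \<and> v i > 0 \<and> Zf t u i > 0 \<and> Hf t u v i > 0"
    and fd': "\<And>i. i \<in> {1..r} \<Longrightarrow> Zpf t u v i > 0"
    using feasS_D[OF f] by auto
  have "cp_system r t mu u v (Zf t u) (Zpf t u v) (Hf t u v) (\<lambda>i. mu / Zf t u i)
     (\<lambda>i. mu / Zpf t u v i) (\<lambda>i. mu / Hf t u v i) (\<lambda>i. mu / u i) (\<lambda>i. mu / v i)"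
    unfolding cp_system_def
  proof (intro conjI ballI)
    show "u 0 + Zf t u 0 = t" "v 0 + Hf t u v 0 = t^2" by (simp_all add: Zf_def Hf_def)
    fix i assume i: "i \<in> {1..r}"
    then have "i \<noteq> 0" by simp
    then show "u i + Zf t u i = t * u (i - 1)" "u i + Zpf t u v i = t * v (i - 1)"
      "v i + Hf t u v i = coef t i * (u (i - 1) + v (i - 1))" by (simp_all add: Zf_def Hf_def Zpf_def)
    show "Zpf t u v i * (mu / Zpf t u v i) = mu" "Zpf t u v i > 0" "mu / Zpf t u v i > 0"
      using fd'[OF i] mu by auto
  next
    fix i assume i: "i \<in> {0..r}"
    show "mu / u i = (if i = 0 then mu / Zf t u 0 else mu / Zf t u i + mu / Zpf t u v i)
               - (if i < r then t * (mu / Zf t u (i + 1)) + coef t (i + 1) * (mu / Hf t u v (i + 1)) else 0)"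
      by (rule su[OF i])
    show "mu / v i = (if i = 0 then 1 else 0) + mu / Hf t u v i
               - (if i < r then t * (mu / Zpf t u v (i + 1)) + coef t (i + 1) * (mu / Hf t u v (i + 1)) else 0)"
      by (rule sv[OF i])
    show "Zf t u i * (mu / Zf t u i) = mu" "Hf t u v i * (mu / Hf t u v i) = mu"
      "u i * (mu / u i) = mu" "v i * (mu / v i) = mu"
      using fd[OF i] by auto
    show "u i > 0" "v i > 0" "Zf t u i > 0" "Hf t u v i > 0" "mu / Zf t u i > 0" "mu / Hf t u v i > 0"
      "mu / u i > 0" "mu / v i > 0"
      using fd[OF i] mu by auto
  qed
  then show ?thesis by blast
qed

lemma cp_exists:
  assumes t: "t \<ge> 1" and mu: "mu > 0"
  shows "\<exists>u v. cp_system r t mu u v (Zf t u) (Zpf t u v) (Hf t u v) (\<lambda>i. mu / Zf t u i)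
     (\<lambda>i. mu / Zpf t u v i) (\<lambda>i. mu / Hf t u v i) (\<lambda>i. mu / u i) (\<lambda>i. mu / v i)"
  by (rule cp_exists1[OF t mu])

lemma Zf_cong: "(\<forall>j\<le>r. u j = u' j) \<Longrightarrow> i \<le> r \<Longrightarrow> Zf t u i = Zf t u' i"
  by (simp add: Zf_def)
lemma Hf_cong: "(\<forall>j\<le>r. u j = u' j \<and> v j = v' j) \<Longrightarrow> i \<le> r \<Longrightarrow> Hf t u v i = Hf t u' v' i"
  by (simp add: Hf_def)
lemma Zpf_cong: "(\<forall>j\<le>r. u j = u' j \<and> v j = v' j) \<Longrightarrow> i \<le> r \<Longrightarrow> Zpf t u v i = Zpf t u' v' i"
  by (simp add: Zpf_def)

theorem mainTheorem13:
  fixes r :: nat and lam :: real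
  assumes "r \<ge> 1"
  shows "\<exists>U V Z Z' H :: real \<Rightarrow> nat \<Rightarrow> real.
     (\<forall>\<^sub>F t in at_top.
        cp_primal r t (t powr lam) (U t) (V t) (Z t) (Z' t) (H t) \<and>
        (\<forall>u v z z' h. cp_primal r t (t powr lam) u v z z' h \<longrightarrow>
           (\<forall>i\<in>{0..r}. u i = U t i \<and> v i = V t i \<and> z i = Z t i \<and> h i = H t i) \<and>
           (\<forall>i\<in>{1..r}. z' i = Z' t i))) \<and>
     (\<forall>i\<in>{0..r}. has_val (\<lambda>t. U t i) (u_trop lam i) \<and> has_val (\<lambda>t. V t i) (v_trop lam i) \<and>
                  has_val (\<lambda>t. Z t i) (z_trop lam i) \<and> has_val (\<lambda>t. H t i) (h_trop lam i)) \<and>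
     (\<forall>i\<in>{1..r}. has_val (\<lambda>t. Z' t i) (z'_trop lam i))"
proof -
  define P where "P t uv \<longleftrightarrow> cp_system r t (t powr lam) (fst uv) (snd uv) (Zf t (fst uv)) (Zpf t (fst uv) (snd uv))
     (Hf t (fst uv) (snd uv)) (\<lambda>i. t powr lam / Zf t (fst uv) i)
     (\<lambda>i. t powr lam / Zpf t (fst uv) (snd uv) i) (\<lambda>i. t powr lam / Hf t (fst uv) (snd uv) i)
     (\<lambda>i. t powr lam / fst uv i) (\<lambda>i. t powr lam / snd uv i)" for t uv
  define U where "U t = fst (SOME uv. P t uv)" for t
  define V where "V t = snd (SOME uv. P t uv)" for t
  define Z where "Z t = Zf t (U t)" for t
  define Z' where "Z' t = Zpf t (U t) (V t)" for t
  define H where "H t = Hf t (U t) (V t)" for t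
  have PU: "P t (U t, V t)" if "t \<ge> 1" for t
  proof -
    have "\<exists>uv. P t uv" using cp_exists[OF that, of "t powr lam" r] that unfolding P_def by auto
    from someI_ex[OF this] show ?thesis unfolding U_def V_def by simp
  qed
  have cpU: "cp_system r t (t powr lam) (U t) (V t) (Z t) (Z' t) (H t) (\<lambda>i. t powr lam / Zf t (U t) i)
     (\<lambda>i. t powr lam / Zpf t (U t) (V t) i) (\<lambda>i. t powr lam / Hf t (U t) (V t) i)
     (\<lambda>i. t powr lam / U t i) (\<lambda>i. t powr lam / V t i)" if "t \<ge> 1" for t
    using PU[OF that] unfolding P_def Z_def Z'_def H_def by simp
  define N where "N = 5 * real r + 4"
  define c where "c = 1 / (2^(r+2) * (N+1))"
  have c0: "c > 0" "N > 0" unfolding c_def N_def by auto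
  have part1: "\<forall>\<^sub>F t in at_top.
        cp_primal r t (t powr lam) (U t) (V t) (Z t) (Z' t) (H t) \<and>
        (\<forall>u v z z' h. cp_primal r t (t powr lam) u v z z' h \<longrightarrow>
           (\<forall>i\<in>{0..r}. u i = U t i \<and> v i = V t i \<and> z i = Z t i \<and> h i = H t i) \<and>
           (\<forall>i\<in>{1..r}. z' i = Z' t i))"
    using eventually_ge_at_top[of 1]
  proof eventually_elim
    case (elim t)
    have mu: "t powr lam > 0" using elim by simp
    have t0: "t > 0" using elim by simp
    show ?case
    proof (intro conjI allI impI)
      show "cp_primal r t (t powr lam) (U t) (V t) (Z t) (Z' t) (H t)"
        unfolding cp_primal_def using cpU[OF elim] by blast
      fix u v z z' h assume "cp_primal r t (t powr lam) u v z z' h"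
      then obtain ya ya' yb su sv where cp: "cp_system r t (t powr lam) u v z z' h ya ya' yb su sv"
        unfolding cp_primal_def by blast
      have eq: "\<forall>i\<in>{0..r}. u i = U t i \<and> v i = V t i" by (rule cp_unique[OF cp cpU[OF elim] mu])
      have eq': "\<forall>j\<le>r. u j = U t j \<and> v j = V t j" using eq by auto
      note F = cp_facts[OF cp mu]
      show "\<forall>i\<in>{0..r}. u i = U t i \<and> v i = V t i \<and> z i = Z t i \<and> h i = H t i"
      proof
        fix i assume i: "i \<in> {0..r}"
        have "Zf t u i = Zf t (U t) i" by (rule Zf_cong) (use eq' i in auto)
        moreover have "Hf t u v i = Hf t (U t) (V t) i" by (rule Hf_cong) (use eq' i in auto)
        ultimately show "u i = U t i \<and> v i = V t i \<and> z i = Z t i \<and> h i = H t i"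
          using F(1)[OF i] eq i unfolding Z_def H_def by auto
      qed
      show "\<forall>i\<in>{1..r}. z' i = Z' t i"
      proof
        fix i assume i: "i \<in> {1..r}"
        have "Zpf t u v i = Zpf t (U t) (V t) i" by (rule Zpf_cong) (use eq' i in auto)
        then show "z' i = Z' t i" using F(2)[OF i] unfolding Z'_def by auto
      qed
    qed
  qed
  have B: "\<forall>\<^sub>F t in at_top.
     (c * gu t (t powr lam) i \<le> U t i \<and> U t i \<le> N * gu t (t powr lam) i) \<and>
     (c * gv t (t powr lam) i \<le> V t i \<and> V t i \<le> N * gv t (t powr lam) i) \<and>
     (c * Gz t (t powr lam) i \<le> Z t i \<and> Z t i \<le> N * Gz t (t powr lam) i) \<and>
     (c * Gh t (t powr lam) i \<le> H t i \<and> H t i \<le> N * Gh t (t powr lam) i) \<and>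
     (i \<ge> 1 \<longrightarrow> c * Gz' t (t powr lam) i \<le> Z' t i \<and> Z' t i \<le> N * Gz' t (t powr lam) i) \<and>
     gu t (t powr lam) i > 0 \<and> gv t (t powr lam) i > 0 \<and> Gz t (t powr lam) i > 0 \<and>
     Gh t (t powr lam) i > 0 \<and> Gz' t (t powr lam) i > 0"
    if i: "i \<le> r" for i
    using eventually_ge_at_top[of 1]
  proof eventually_elim
    case (elim t)
    have mu: "t powr lam > 0" using elim by simp
    have t0: "t > 0" using elim by simp
    note cb = cp_bounds[OF cpU[OF elim] mu t0 i, folded N_def, folded c_def]
    show ?case using cb g_pos[OF t0 mu] G_pos[OF t0 mu] unfolding Z_def Z'_def H_def by auto
  qed
  have part2: "\<forall>i\<in>{0..r}. has_val (\<lambda>t. U t i) (u_trop lam i) \<and> has_val (\<lambda>t. V t i) (v_trop lam i) \<and>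
                  has_val (\<lambda>t. Z t i) (z_trop lam i) \<and> has_val (\<lambda>t. H t i) (h_trop lam i)"
  proof
    fix i assume "i \<in> {0..r}"
    then have i: "i \<le> r" by simp
    note Bi = B[OF i]
    show "has_val (\<lambda>t. U t i) (u_trop lam i) \<and> has_val (\<lambda>t. V t i) (v_trop lam i) \<and>
                  has_val (\<lambda>t. Z t i) (z_trop lam i) \<and> has_val (\<lambda>t. H t i) (h_trop lam i)"
    proof (intro conjI)
      show "has_val (\<lambda>t. U t i) (u_trop lam i)"
        by (rule hv_squeeze[OF g_val[THEN conjunct1] c0]) (use Bi in \<open>eventually_elim, auto\<close>)
      show "has_val (\<lambda>t. V t i) (v_trop lam i)"
        by (rule hv_squeeze[OF g_val[THEN conjunct2] c0]) (use Bi in \<open>eventually_elim, auto\<close>)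
      show "has_val (\<lambda>t. Z t i) (z_trop lam i)"
        by (rule hv_squeeze[OF G_val[THEN conjunct1] c0]) (use Bi in \<open>eventually_elim, auto\<close>)
      show "has_val (\<lambda>t. H t i) (h_trop lam i)"
        by (rule hv_squeeze[OF G_val[THEN conjunct2, THEN conjunct1] c0]) (use Bi in \<open>eventually_elim, auto\<close>)
    qed
  qed
  have part3: "\<forall>i\<in>{1..r}. has_val (\<lambda>t. Z' t i) (z'_trop lam i)"
  proof
    fix i assume "i \<in> {1..r}"
    then have i: "i \<le> r" and i1: "i \<ge> 1" by auto
    note Bi = B[OF i]
    show "has_val (\<lambda>t. Z' t i) (z'_trop lam i)"
      by (rule hv_squeeze[OF G_val[THEN conjunct2, THEN conjunct2] c0]) (use Bi in \<open>eventually_elim, use i1 in auto\<close>)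
  qed
  show ?thesis using part1 part2 part3 by blast
qed

end
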